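(* Let $a>0$ and $T>0$. Then for every finite $\Lambda\subset\mathbb Z^2$, every $A\subset\Lambda$ and every $i\in\Lambda\setminus A$, $$\mu^0_{\Lambda\setminus A}(h_i>T+a)\le\mu^0_\Lambda\big(h_i>T\,\big|\,|h_j|\le a\ \forall j\in A\big)\le\mu^0_{\Lambda\setminus A}(h_i>T-a).$$
   Context: Fix an integer $r\ge1$. For each $k\in\mathbb Z^2$ let $\Psi_k:\mathbb R\to\mathbb R$ satisfy: $\Psi_k\equiv0$ if $\|k\|_1>r$; $\Psi_k=\Psi_{-k}$ and $\Psi_k(x)=\Psi_k(-x)$; $\Psi_k$ is $C^2$; $\Psi_k''\ge0$, and there is $c>0$ such that the translation-invariant random walk on $\mathbb Z^2$ with jump rates $P_c(0,j)=1$ if $\Psi_j''(h)\ge c$ for all $h$ and $0$ otherwise is irreducible. For finite $\Lambda\subset\mathbb Z^2$ and $b\in\mathbb R$, $$\mu^b_\Lambda(d\underline h)=\frac1{Z^b_\Lambda}\exp\Big\{-\sum_{\langle ij\rangle\cap\Lambda\neq\emptyset}\Psi_{j-i}(h_i-h_j)\Big\}\prod_{i\in\Lambda}dh_i\prod_{i\notin\Lambda}\delta_b(dh_i),$$ the sum being over pairs of distinct sites with $\|j-i\|_\infty\le r$ meeting $\Lambda$. *)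

theory Defs
  imports "HOL-Analysis.Analysis"
begin

type_synonym site = "int \<times> int"
type_synonym config = "site \<Rightarrow> real"

definition norm1 :: "site \<Rightarrow> int" where
  "norm1 k = \<bar>fst k\<bar> + \<bar>snd k\<bar>"

definition norminf :: "site \<Rightarrow> int" where
  "norminf k = max \<bar>fst k\<bar> \<bar>snd k\<bar>"

definition site_diff :: "site \<Rightarrow> site \<Rightarrow> site" where
  "site_diff j i = (fst j - fst i, snd j - snd i)"

definition site_add :: "site \<Rightarrow> site \<Rightarrow> site" where
  "site_add u v = (fst u + fst v, snd u + snd v)"

definition site_neg :: "site \<Rightarrow> site" where
  "site_neg k = (- fst k, - snd k)"

definition C2 :: "(real \<Rightarrow> real) \<Rightarrow> bool" where
  "C2 f \<longleftrightarrow> (\<exists>f' f''. (\<forall>x. (f has_real_derivative f' x) (at x)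
       \<and> (f' has_real_derivative f'' x) (at x)) \<and> continuous_on UNIV f'')"

text \<open>Jump set of the random walk P_c: P_c(0,j)=1 iff Psi_j'' >= c everywhere.\<close>
definition jumps :: "(site \<Rightarrow> real \<Rightarrow> real) \<Rightarrow> real \<Rightarrow> site set" where
  "jumps \<Psi> c = {j. \<forall>h. deriv (deriv (\<Psi> j)) h \<ge> c}"

definition irreducible_walk :: "site set \<Rightarrow> bool" where
  "irreducible_walk J \<longleftrightarrow>
     (\<forall>x y. (x, y) \<in> {(u, site_add u j) | u j. j \<in> J}\<^sup>*)"

definition admissible_potential :: "nat \<Rightarrow> (site \<Rightarrow> real \<Rightarrow> real) \<Rightarrow> bool" where
  "admissible_potential r \<Psi> \<longleftrightarrow>
     (\<forall>k. norm1 k > int r \<longrightarrow> (\<forall>x. \<Psi> k x = 0))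
   \<and> (\<forall>k. \<Psi> k = \<Psi> (site_neg k))
   \<and> (\<forall>k x. \<Psi> k x = \<Psi> k (- x))
   \<and> (\<forall>k. C2 (\<Psi> k))
   \<and> (\<forall>k x. deriv (deriv (\<Psi> k)) x \<ge> 0)
   \<and> (\<exists>c>0. irreducible_walk (jumps \<Psi> c))"

text \<open>Each unordered pair <ij> appears twice; by the symmetries of Psi both
  orientations give the same term, hence the factor 1/2 in the Hamiltonian.\<close>
definition pairs :: "nat \<Rightarrow> site set \<Rightarrow> (site \<times> site) set" where
  "pairs r \<Lambda> = {(i, j). i \<noteq> j \<and> norminf (site_diff j i) \<le> int r \<and> (i \<in> \<Lambda> \<or> j \<in> \<Lambda>)}"

definition hamiltonian :: "nat \<Rightarrow> (site \<Rightarrow> real \<Rightarrow> real) \<Rightarrow> site set \<Rightarrow> config \<Rightarrow> real" where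
  "hamiltonian r \<Psi> \<Lambda> h =
     (1/2) * (\<Sum>(i, j) \<in> pairs r \<Lambda>. \<Psi> (site_diff j i) (h i - h j))"

definition ext_bc :: "real \<Rightarrow> site set \<Rightarrow> config \<Rightarrow> config" where
  "ext_bc b \<Lambda> x = (\<lambda>i. if i \<in> \<Lambda> then x i else b)"

definition part_fun :: "nat \<Rightarrow> (site \<Rightarrow> real \<Rightarrow> real) \<Rightarrow> site set \<Rightarrow> real \<Rightarrow> ennreal" where
  "part_fun r \<Psi> \<Lambda> b =
     (\<integral>\<^sup>+ x. ennreal (exp (- hamiltonian r \<Psi> \<Lambda> (ext_bc b \<Lambda> x))) \<partial>(PiM \<Lambda> (\<lambda>_. lborel)))"

definition gibbs :: "nat \<Rightarrow> (site \<Rightarrow> real \<Rightarrow> real) \<Rightarrow> site set \<Rightarrow> real \<Rightarrow> config measure" where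
  "gibbs r \<Psi> \<Lambda> b =
     distr (density (PiM \<Lambda> (\<lambda>_. lborel))
              (\<lambda>x. ennreal (exp (- hamiltonian r \<Psi> \<Lambda> (ext_bc b \<Lambda> x))) / part_fun r \<Psi> \<Lambda> b))
           (PiM UNIV (\<lambda>_. borel)) (ext_bc b \<Lambda>)"

end

theory Submission
  imports Defs "HOL-Probability.Probability"
begin

lemma ad_elem_real:
  fixes a b C d :: real
  assumes "0 \<le> a" "0 \<le> b" "0 \<le> d" "a \<le> C" "b \<le> C" "a * b \<le> C * d"
  shows "a + b \<le> C + d"
proof (cases "C = 0")
  case True then show ?thesis using assms by auto
next
  case False
  then have C: "C > 0" using assms by auto
  have "(C - a) * (C - b) \<ge> 0" using assms by auto
  then have "C * (a + b) \<le> C * C + a * b" by (simp add: algebra_simps)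
  also have "\<dots> \<le> C * (C + d)" using assms by (simp add: algebra_simps)
  finally show ?thesis using C by (simp add: mult_le_cancel_left)
qed

lemma ad_elem:
  fixes a b C d :: ennreal
  assumes "a \<le> C" "b \<le> C" "a * b \<le> C * d"
  shows "a + b \<le> C + d"
proof (cases "C = top \<or> d = top")
  case True then show ?thesis by (auto simp: top_add add_top)
next
  case False
  then have Cf: "C < top" "d < top" by (auto simp: top.not_eq_extremum)
  then have af: "a < top" "b < top" using assms by (auto intro: le_less_trans)
  obtain a' b' C' d' where eq: "a = ennreal a'" "b = ennreal b'" "C = ennreal C'" "d = ennreal d'"
    and nn: "0 \<le> a'" "0 \<le> b'" "0 \<le> C'" "0 \<le> d'"
    using Cf af by (metis ennreal_cases less_top_ennreal)
  have "a' \<le> C'" "b' \<le> C'" "a' * b' \<le> C' * d'"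
    using assms nn unfolding eq by (auto simp: ennreal_mult[symmetric])
  then have "a' + b' \<le> C' + d'" using ad_elem_real nn by blast
  then show ?thesis unfolding eq using nn by (simp add: ennreal_plus[symmetric] del: ennreal_plus)
qed

lemma ad_1d:
  fixes \<alpha> \<beta> \<gamma> \<delta> :: "real \<Rightarrow> ennreal"
  assumes [measurable]: "\<alpha> \<in> borel_measurable borel" "\<beta> \<in> borel_measurable borel"
    "\<gamma> \<in> borel_measurable borel" "\<delta> \<in> borel_measurable borel"
  assumes H: "\<And>t s. \<alpha> t * \<beta> s \<le> \<gamma> (max t s) * \<delta> (min t s)"
  shows "(\<integral>\<^sup>+t. \<alpha> t \<partial>lborel) * (\<integral>\<^sup>+t. \<beta> t \<partial>lborel)
       \<le> (\<integral>\<^sup>+t. \<gamma> t \<partial>lborel) * (\<integral>\<^sup>+t. \<delta> t \<partial>lborel)"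
proof -
  have pw0: "\<alpha> t * \<beta> s + \<alpha> s * \<beta> t \<le> \<gamma> s * \<delta> t + \<gamma> t * \<delta> s" if "t \<le> s" for t s
  proof (rule ad_elem)
    show "\<alpha> t * \<beta> s \<le> \<gamma> s * \<delta> t" using H[of t s] that by (simp add: max_def min_def)
    show "\<alpha> s * \<beta> t \<le> \<gamma> s * \<delta> t" using H[of s t] that by (cases "s = t") (simp_all add: max_def min_def)
    have "\<alpha> t * \<beta> s * (\<alpha> s * \<beta> t) = (\<alpha> t * \<beta> t) * (\<alpha> s * \<beta> s)" by (simp add: ac_simps)
    also have "\<dots> \<le> (\<gamma> t * \<delta> t) * (\<gamma> s * \<delta> s)"
      using H[of t t] H[of s s] by (intro mult_mono[of "_ * _"]) simp_all
    also have "\<dots> = \<gamma> s * \<delta> t * (\<gamma> t * \<delta> s)" by (simp add: ac_simps)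
    finally show "\<alpha> t * \<beta> s * (\<alpha> s * \<beta> t) \<le> \<gamma> s * \<delta> t * (\<gamma> t * \<delta> s)" .
  qed
  have pw: "\<alpha> t * \<beta> s + \<alpha> s * \<beta> t \<le> \<gamma> t * \<delta> s + \<gamma> s * \<delta> t" for t s
  proof (cases "t \<le> s")
    case True then show ?thesis using pw0[of t s] by (simp add: ac_simps)
  next
    case False then show ?thesis using pw0[of s t] by (simp add: ac_simps)
  qed
  let ?A = "\<integral>\<^sup>+t. \<alpha> t \<partial>lborel" and ?B = "\<integral>\<^sup>+t. \<beta> t \<partial>lborel"
  let ?C = "\<integral>\<^sup>+t. \<gamma> t \<partial>lborel" and ?D = "\<integral>\<^sup>+t. \<delta> t \<partial>lborel"
  have L: "(\<integral>\<^sup>+t. (\<integral>\<^sup>+s. \<alpha> t * \<beta> s + \<alpha> s * \<beta> t \<partial>lborel) \<partial>lborel) = ?A * ?B + ?A * ?B"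
    by (simp add: nn_integral_add nn_integral_cmult nn_integral_multc ac_simps)
  have R: "(\<integral>\<^sup>+t. (\<integral>\<^sup>+s. \<gamma> t * \<delta> s + \<gamma> s * \<delta> t \<partial>lborel) \<partial>lborel) = ?C * ?D + ?C * ?D"
    by (simp add: nn_integral_add nn_integral_cmult nn_integral_multc ac_simps)
  have "?A * ?B + ?A * ?B \<le> ?C * ?D + ?C * ?D"
    unfolding L[symmetric] R[symmetric]
    by (intro nn_integral_mono pw)
  then show ?thesis unfolding mult_2[symmetric] by (simp add: ennreal_mult_le_mult_iff)
qed


lemma meas_upd:
  assumes "k \<notin> I"
  shows "(\<lambda>p. (fst p)(k := snd p)) \<in> measurable (PiM I (\<lambda>_. lborel) \<Otimes>\<^sub>M lborel) (PiM (insert k I) (\<lambda>_. lborel))"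
proof -
  have eq: "(\<lambda>p. (fst p)(k := snd p)) = (\<lambda>p i. if i = k then snd p else fst p i)"
    by (auto simp: fun_eq_iff)
  show ?thesis unfolding eq
    apply (rule measurable_PiM_single')
    subgoal for i by (cases "i = k") auto
    using assms by (auto simp: space_pair_measure space_PiM PiE_def extensional_def)
qed

lemma sup_upd: "sup ((x::'a\<Rightarrow>real)(k := t)) (y(k := s)) = (sup x y)(k := max t s)"
  by (auto simp: fun_eq_iff sup_max)
lemma inf_upd: "inf ((x::'a\<Rightarrow>real)(k := t)) (y(k := s)) = (inf x y)(k := min t s)"
  by (auto simp: fun_eq_iff inf_min)

lemma sup_space: "x \<in> space (PiM I (\<lambda>_. lborel)) \<Longrightarrow> y \<in> space (PiM I (\<lambda>_. lborel))
   \<Longrightarrow> sup x y \<in> space (PiM I (\<lambda>_. lborel :: real measure))"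
  by (auto simp: space_PiM PiE_def extensional_def)
lemma inf_space: "x \<in> space (PiM I (\<lambda>_. lborel)) \<Longrightarrow> y \<in> space (PiM I (\<lambda>_. lborel))
   \<Longrightarrow> inf x y \<in> space (PiM I (\<lambda>_. lborel :: real measure))"
  by (auto simp: space_PiM PiE_def extensional_def)

lemma meas_slice:
  assumes "k \<notin> I" "f \<in> borel_measurable (PiM (insert k I) (\<lambda>_. lborel))"
  shows "(\<lambda>x. \<integral>\<^sup>+t. f (x(k := t)) \<partial>lborel) \<in> borel_measurable (PiM I (\<lambda>_. lborel))"
proof -
  have "(\<lambda>p. f ((fst p)(k := snd p))) \<in> borel_measurable (PiM I (\<lambda>_. lborel) \<Otimes>\<^sub>M lborel)"
    using measurable_comp[OF meas_upd[OF assms(1)] assms(2)] by (simp add: comp_def)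
  then have "(\<lambda>(x, t). f (x(k := t))) \<in> borel_measurable (PiM I (\<lambda>_. lborel) \<Otimes>\<^sub>M lborel)"
    by (simp add: case_prod_beta')
  then show ?thesis by (rule lborel.borel_measurable_nn_integral)
qed

lemma meas_slice1:
  assumes "k \<notin> I" "f \<in> borel_measurable (PiM (insert k I) (\<lambda>_. lborel))"
    "x \<in> space (PiM I (\<lambda>_. lborel))"
  shows "(\<lambda>t. f (x(k := t))) \<in> borel_measurable borel"
  using measurable_comp[OF measurable_component_update[OF assms(3) assms(1)] assms(2)]
  by (simp add: comp_def)

lemma ad_nd:
  fixes I :: "'i set"
  assumes "finite I"
  fixes \<alpha> \<beta> \<gamma> \<delta> :: "('i \<Rightarrow> real) \<Rightarrow> ennreal"
  shows "\<alpha> \<in> borel_measurable (PiM I (\<lambda>_. lborel)) \<Longrightarrow> \<beta> \<in> borel_measurable (PiM I (\<lambda>_. lborel))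
    \<Longrightarrow> \<gamma> \<in> borel_measurable (PiM I (\<lambda>_. lborel)) \<Longrightarrow> \<delta> \<in> borel_measurable (PiM I (\<lambda>_. lborel))
    \<Longrightarrow> (\<And>x y. x \<in> space (PiM I (\<lambda>_. lborel)) \<Longrightarrow> y \<in> space (PiM I (\<lambda>_. lborel))
          \<Longrightarrow> \<alpha> x * \<beta> y \<le> \<gamma> (sup x y) * \<delta> (inf x y))
    \<Longrightarrow> (\<integral>\<^sup>+x. \<alpha> x \<partial>PiM I (\<lambda>_. lborel)) * (\<integral>\<^sup>+x. \<beta> x \<partial>PiM I (\<lambda>_. lborel))
      \<le> (\<integral>\<^sup>+x. \<gamma> x \<partial>PiM I (\<lambda>_. lborel)) * (\<integral>\<^sup>+x. \<delta> x \<partial>PiM I (\<lambda>_. lborel))"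
  using assms
proof (induction I arbitrary: \<alpha> \<beta> \<gamma> \<delta> rule: finite_induct)
  case empty
  have "\<alpha> (\<lambda>_. undefined) * \<beta> (\<lambda>_. undefined) \<le> \<gamma> (\<lambda>_. undefined) * \<delta> (\<lambda>_. undefined)"
    using empty.prems(5)[of "\<lambda>_. undefined" "\<lambda>_. undefined"] by simp
  then show ?case by (simp add: PiM_empty nn_integral_count_space_finite)
next
  case (insert k I)
  interpret product_sigma_finite "\<lambda>_::'i. lborel :: real measure" by standard
  let ?M = "PiM I (\<lambda>_. lborel :: real measure)"
  define sl where "sl f x = (\<integral>\<^sup>+t. f (x(k := t)) \<partial>lborel)" for f :: "('i \<Rightarrow> real) \<Rightarrow> ennreal" and x
  have int: "(\<integral>\<^sup>+x. f x \<partial>PiM (insert k I) (\<lambda>_. lborel)) = (\<integral>\<^sup>+x. sl f x \<partial>?M)"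
    if "f \<in> borel_measurable (PiM (insert k I) (\<lambda>_. lborel))" for f
    unfolding sl_def by (rule product_nn_integral_insert[OF insert(1,2) that])
  have ms: "sl f \<in> borel_measurable ?M"
    if "f \<in> borel_measurable (PiM (insert k I) (\<lambda>_. lborel))" for f
    unfolding sl_def[abs_def] using meas_slice[OF insert(2) that] .
  show ?case
    unfolding int[OF insert.prems(1)] int[OF insert.prems(2)] int[OF insert.prems(3)] int[OF insert.prems(4)]
  proof (rule insert.IH[OF ms[OF insert.prems(1)] ms[OF insert.prems(2)] ms[OF insert.prems(3)] ms[OF insert.prems(4)]])
    fix x y assume x: "x \<in> space ?M" and y: "y \<in> space ?M"
    have sx: "sup x y \<in> space ?M" "inf x y \<in> space ?M" using sup_space[OF x y] inf_space[OF x y] .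
    show "sl \<alpha> x * sl \<beta> y \<le> sl \<gamma> (sup x y) * sl \<delta> (inf x y)"
      unfolding sl_def
    proof (rule ad_1d)
      show "(\<lambda>t. \<alpha> (x(k := t))) \<in> borel_measurable borel" by (rule meas_slice1[OF insert(2) insert.prems(1) x])
      show "(\<lambda>t. \<beta> (y(k := t))) \<in> borel_measurable borel" by (rule meas_slice1[OF insert(2) insert.prems(2) y])
      show "(\<lambda>t. \<gamma> ((sup x y)(k := t))) \<in> borel_measurable borel" by (rule meas_slice1[OF insert(2) insert.prems(3) sx(1)])
      show "(\<lambda>t. \<delta> ((inf x y)(k := t))) \<in> borel_measurable borel" by (rule meas_slice1[OF insert(2) insert.prems(4) sx(2)])
      fix t s
      have "x(k := t) \<in> space (PiM (insert k I) (\<lambda>_. lborel))" "y(k := s) \<in> space (PiM (insert k I) (\<lambda>_. lborel))"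
        using x y by (auto simp: space_PiM PiE_def extensional_def)
      from insert.prems(5)[OF this] sup_upd[of x k t y s] inf_upd[of x k t y s] show "\<alpha> (x(k := t)) * \<beta> (y(k := s)) \<le> \<gamma> ((sup x y)(k := max t s)) * \<delta> ((inf x y)(k := min t s))"
        by metis
    qed
  qed
qed


lemma C2_derivs:
  assumes "C2 f"
  obtains f' f'' where "\<And>x. (f has_real_derivative f' x) (at x)"
    "\<And>x. (f' has_real_derivative f'' x) (at x)" "\<And>x. deriv (deriv f) x = f'' x"
proof -
  from assms obtain f' f'' where d: "\<And>x. (f has_real_derivative f' x) (at x)"
    "\<And>x. (f' has_real_derivative f'' x) (at x)" unfolding C2_def by blast
  have "deriv f = f'" using d(1) by (auto simp: fun_eq_iff intro: DERIV_imp_deriv)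
  then have "deriv (deriv f) x = f'' x" for x using d(2) by (auto intro: DERIV_imp_deriv)
  with d that show ?thesis by blast
qed

lemma psi_convex:
  assumes "admissible_potential r \<Psi>"
  shows "convex_on UNIV (\<Psi> k)"
proof -
  have "C2 (\<Psi> k)" using assms unfolding admissible_potential_def by blast
  then obtain f' f'' where d: "\<And>x. (\<Psi> k has_real_derivative f' x) (at x)"
    "\<And>x. (f' has_real_derivative f'' x) (at x)" "\<And>x. deriv (deriv (\<Psi> k)) x = f'' x"
    using C2_derivs[OF \<open>C2 (\<Psi> k)\<close>] by blast
  have "f'' x \<ge> 0" for x using assms d(3)[of x] unfolding admissible_potential_def by metis
  then show ?thesis by (intro f''_ge0_imp_convex[OF convex_UNIV d(1) d(2)]) auto
qed

lemma convex_even_min: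
  fixes g :: "real \<Rightarrow> real"
  assumes "convex_on UNIV g" "\<And>x. g (- x) = g x"
  shows "g 0 \<le> g x"
proof -
  have "g ((1 - 1/2) *\<^sub>R x + (1/2) *\<^sub>R (- x)) \<le> (1 - 1/2) * g x + (1/2) * g (- x)"
    by (rule convex_onD[OF assms(1)]) auto
  then show ?thesis using assms(2)[of x] by simp
qed

lemma psi_even:
  assumes "admissible_potential r \<Psi>"
  shows "\<Psi> k (- x) = \<Psi> k x"
proof -
  have "\<forall>k x. \<Psi> k x = \<Psi> k (- x)" using assms unfolding admissible_potential_def by blast
  then have "\<Psi> k (- x) = \<Psi> k (- (- x))" by blast
  then show ?thesis by simp
qed

lemma psi_ge0:
  assumes "admissible_potential r \<Psi>"
  shows "\<Psi> k 0 \<le> \<Psi> k x"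
  using convex_even_min[OF psi_convex[OF assms], of k x] psi_even[OF assms] by blast

lemma psi_quad:
  assumes "admissible_potential r \<Psi>" "k \<in> jumps \<Psi> c"
  shows "\<Psi> k 0 + c / 2 * x\<^sup>2 \<le> \<Psi> k x"
proof -
  have "C2 (\<Psi> k)" using assms unfolding admissible_potential_def by blast
  then obtain f' f'' where d: "\<And>x. (\<Psi> k has_real_derivative f' x) (at x)"
    "\<And>x. (f' has_real_derivative f'' x) (at x)" "\<And>x. deriv (deriv (\<Psi> k)) x = f'' x"
    using C2_derivs[OF \<open>C2 (\<Psi> k)\<close>] by blast
  define g where "g x = \<Psi> k x - c / 2 * x\<^sup>2" for x
  have g1: "(g has_real_derivative (f' x - c * x)) (at x)" for x
    unfolding g_def[abs_def] by (auto intro!: derivative_eq_intros d(1))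
  have g2: "((\<lambda>x. f' x - c * x) has_real_derivative (f'' x - c)) (at x)" for x
    by (auto intro!: derivative_eq_intros d(2))
  have "f'' x \<ge> c" for x
  proof -
    have "\<forall>h. c \<le> deriv (deriv (\<Psi> k)) h" using assms(2) unfolding jumps_def by simp
    then have "c \<le> deriv (deriv (\<Psi> k)) x" by blast
    then show ?thesis using d(3)[of x] by simp
  qed
  then have "convex_on UNIV g"
    by (intro f''_ge0_imp_convex[OF convex_UNIV g1 g2]) auto
  moreover have "g (- x) = g x" for x using psi_even[OF assms(1)] unfolding g_def by simp
  ultimately have "g 0 \<le> g x" by (rule convex_even_min)
  then show ?thesis unfolding g_def by simp
qed

lemma convex_two_point:
  fixes \<phi> :: "real \<Rightarrow> real"
  assumes cv: "convex_on UNIV \<phi>" and "a \<le> c" "c \<le> b" "c + d = a + b"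
  shows "\<phi> c + \<phi> d \<le> \<phi> a + \<phi> b"
proof (cases "a = b")
  case True then show ?thesis using assms by simp
next
  case False
  then have ab: "a < b" using assms by simp
  define l where "l = (b - c) / (b - a)"
  have l: "0 \<le> l" "l \<le> 1" using assms ab unfolding l_def by (auto simp: field_simps)
  have lba: "l * (b - a) = b - c" using ab unfolding l_def by simp
  have c: "c = (1 - (1 - l)) *\<^sub>R a + (1 - l) *\<^sub>R b" using lba by (simp add: algebra_simps)
  have d: "d = (1 - l) *\<^sub>R a + l *\<^sub>R b" using lba assms by (simp add: algebra_simps)
  have "\<phi> c \<le> (1 - (1 - l)) * \<phi> a + (1 - l) * \<phi> b" unfolding c by (rule convex_onD[OF cv]) (use l in auto)
  moreover have "\<phi> d \<le> (1 - l) * \<phi> a + l * \<phi> b" unfolding d by (rule convex_onD[OF cv]) (use l in auto)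
  ultimately show ?thesis by (simp add: algebra_simps)
qed

lemma submod_pair:
  fixes \<phi> :: "real \<Rightarrow> real"
  assumes cv: "convex_on UNIV \<phi>"
  shows "\<phi> (max x1 y1 - max x2 y2) + \<phi> (min x1 y1 - min x2 y2) \<le> \<phi> (x1 - x2) + \<phi> (y1 - y2)"
proof -
  consider "x1 \<le> y1" "x2 \<le> y2" | "y1 \<le> x1" "y2 \<le> x2" | "x1 \<le> y1" "y2 < x2" | "y1 \<le> x1" "x2 < y2" by linarith
  then show ?thesis
  proof cases
    case 1
    then have e: "max x1 y1 = y1" "max x2 y2 = y2" "min x1 y1 = x1" "min x2 y2 = x2" by auto
    show ?thesis unfolding e by linarith
  next
    case 2
    then have e: "max x1 y1 = x1" "max x2 y2 = x2" "min x1 y1 = y1" "min x2 y2 = y2" by auto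
    show ?thesis unfolding e by linarith
  next
    case 3
    then have e: "max x1 y1 = y1" "max x2 y2 = x2" "min x1 y1 = x1" "min x2 y2 = y2" by auto
    have "\<phi> (x1 - y2) + \<phi> (y1 - x2) \<le> \<phi> (x1 - x2) + \<phi> (y1 - y2)"
      by (rule convex_two_point[OF cv]) (use 3 in auto)
    then show ?thesis unfolding e by linarith
  next
    case 4
    then have e: "max x1 y1 = x1" "max x2 y2 = y2" "min x1 y1 = y1" "min x2 y2 = x2" by auto
    have "\<phi> (y1 - x2) + \<phi> (x1 - y2) \<le> \<phi> (y1 - y2) + \<phi> (x1 - x2)"
      by (rule convex_two_point[OF cv]) (use 4 in auto)
    then show ?thesis unfolding e by linarith
  qed
qed


definition HP :: "(site \<Rightarrow> real \<Rightarrow> real) \<Rightarrow> (site \<times> site) set \<Rightarrow> config \<Rightarrow> real" where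
  "HP \<Psi> P X = (1/2) * (\<Sum>(i, j)\<in>P. \<Psi> (site_diff j i) (X i - X j))"

lemma ham_HP: "hamiltonian r \<Psi> \<Lambda> h = HP \<Psi> (pairs r \<Lambda>) h"
  unfolding hamiltonian_def HP_def ..

lemma HP_submod:
  assumes "admissible_potential r \<Psi>"
  shows "HP \<Psi> P (sup X Y) + HP \<Psi> P (inf X Y) \<le> HP \<Psi> P X + HP \<Psi> P Y"
proof -
  have "(\<Sum>p\<in>P. (case p of (i, j) \<Rightarrow> \<Psi> (site_diff j i) ((sup X Y) i - (sup X Y) j))
             + (case p of (i, j) \<Rightarrow> \<Psi> (site_diff j i) ((inf X Y) i - (inf X Y) j)))
      \<le> (\<Sum>p\<in>P. (case p of (i, j) \<Rightarrow> \<Psi> (site_diff j i) (X i - X j))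
             + (case p of (i, j) \<Rightarrow> \<Psi> (site_diff j i) (Y i - Y j)))"
  proof (rule sum_mono)
    fix p assume "p \<in> P"
    obtain i j where p: "p = (i, j)" by (cases p)
    show "(case p of (i, j) \<Rightarrow> \<Psi> (site_diff j i) ((sup X Y) i - (sup X Y) j))
             + (case p of (i, j) \<Rightarrow> \<Psi> (site_diff j i) ((inf X Y) i - (inf X Y) j))
      \<le> (case p of (i, j) \<Rightarrow> \<Psi> (site_diff j i) (X i - X j))
             + (case p of (i, j) \<Rightarrow> \<Psi> (site_diff j i) (Y i - Y j))"
      unfolding p using submod_pair[OF psi_convex[OF assms], of "site_diff j i" "X i" "Y i" "X j" "Y j"]
      by (simp add: sup_max inf_min)
  qed
  then show ?thesis unfolding HP_def sum.distrib by simp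
qed

lemma finite_pairs:
  assumes "finite \<Lambda>"
  shows "finite (pairs r \<Lambda>)"
proof -
  define D where "D = {-int r..int r} \<times> {-int r..int r}"
  have fD: "finite D" unfolding D_def by simp
  have "pairs r \<Lambda> \<subseteq> (\<lambda>(u, d). (u, site_add u d)) ` (\<Lambda> \<times> D) \<union> (\<lambda>(u, d). (site_add u d, u)) ` (\<Lambda> \<times> D)"
  proof
    fix p assume p: "p \<in> pairs r \<Lambda>"
    obtain i j where ij: "p = (i, j)" by (cases p)
    have n: "norminf (site_diff j i) \<le> int r" "i \<in> \<Lambda> \<or> j \<in> \<Lambda>" using p unfolding ij pairs_def by auto
    have d1: "site_diff j i \<in> D" "site_diff i j \<in> D"
      using n(1) unfolding D_def norminf_def site_diff_def by auto
    have e1: "j = site_add i (site_diff j i)" "i = site_add j (site_diff i j)"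
      unfolding site_add_def site_diff_def by auto
    show "p \<in> (\<lambda>(u, d). (u, site_add u d)) ` (\<Lambda> \<times> D) \<union> (\<lambda>(u, d). (site_add u d, u)) ` (\<Lambda> \<times> D)"
    proof (cases "i \<in> \<Lambda>")
      case True
      then have "(i, site_diff j i) \<in> \<Lambda> \<times> D" using d1 by auto
      then show ?thesis unfolding ij using e1(1) by (auto intro: image_eqI[where x="(i, site_diff j i)"])
    next
      case False
      then have "(j, site_diff i j) \<in> \<Lambda> \<times> D" using d1 n(2) by auto
      then show ?thesis unfolding ij using e1(2) by (auto intro: image_eqI[where x="(j, site_diff i j)"])
    qed
  qed
  then show ?thesis by (rule finite_subset) (use assms fD in auto)
qed

lemma pairs_mono: "S \<subseteq> \<Lambda> \<Longrightarrow> pairs r S \<subseteq> pairs r \<Lambda>"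
  unfolding pairs_def by auto

lemma pairs_rest: "p \<in> pairs r \<Lambda> - pairs r S \<Longrightarrow> fst p \<notin> S \<and> snd p \<notin> S"
  unfolding pairs_def by auto

lemma HP_split:
  assumes "finite P" "Q \<subseteq> P"
  shows "HP \<Psi> P X = HP \<Psi> Q X + HP \<Psi> (P - Q) X"
  unfolding HP_def using sum.subset_diff[OF assms(2) assms(1)] by (simp add: algebra_simps)

lemma HP_cong:
  assumes "\<And>u v. (u, v) \<in> P \<Longrightarrow> X u = Y u \<and> X v = Y v"
  shows "HP \<Psi> P X = HP \<Psi> P Y"
  unfolding HP_def by (rule arg_cong[where f="\<lambda>x. (1/2) * x"], rule sum.cong) (use assms in auto)

lemma HP_shift: "HP \<Psi> P (\<lambda>u. X u + b) = HP \<Psi> P X"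
  unfolding HP_def by simp

lemma ham_lower:
  assumes adm: "admissible_potential r \<Psi>" and "finite \<Lambda>" "S \<subseteq> \<Lambda>" and le: "\<And>u. u \<notin> S \<Longrightarrow> X u \<le> Y u"
  shows "HP \<Psi> (pairs r \<Lambda>) (sup X Y) + HP \<Psi> (pairs r S) (inf X Y)
       \<le> HP \<Psi> (pairs r S) X + HP \<Psi> (pairs r \<Lambda>) Y"
proof -
  have f: "finite (pairs r \<Lambda>)" by (rule finite_pairs[OF assms(2)])
  have sub: "pairs r S \<subseteq> pairs r \<Lambda>" by (rule pairs_mono[OF assms(3)])
  have c: "HP \<Psi> (pairs r \<Lambda> - pairs r S) (sup X Y) = HP \<Psi> (pairs r \<Lambda> - pairs r S) Y"
  proof (rule HP_cong)
    fix u v assume "(u, v) \<in> pairs r \<Lambda> - pairs r S"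
    then have "u \<notin> S" "v \<notin> S" using pairs_rest by fastforce+
    then show "(sup X Y) u = Y u \<and> (sup X Y) v = Y v" using le by (auto simp: sup_max max_def)
  qed
  show ?thesis
    using HP_split[OF f sub, of \<Psi> "sup X Y"] HP_split[OF f sub, of \<Psi> Y] c HP_submod[OF adm, of "pairs r S" X Y]
    by linarith
qed

lemma ham_upper:
  assumes adm: "admissible_potential r \<Psi>" and "finite \<Lambda>" "S \<subseteq> \<Lambda>" and le: "\<And>u. u \<notin> S \<Longrightarrow> X u \<le> Y u"
  shows "HP \<Psi> (pairs r S) (sup X Y) + HP \<Psi> (pairs r \<Lambda>) (inf X Y)
       \<le> HP \<Psi> (pairs r \<Lambda>) X + HP \<Psi> (pairs r S) Y"
proof -
  have f: "finite (pairs r \<Lambda>)" by (rule finite_pairs[OF assms(2)])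
  have sub: "pairs r S \<subseteq> pairs r \<Lambda>" by (rule pairs_mono[OF assms(3)])
  have c: "HP \<Psi> (pairs r \<Lambda> - pairs r S) (inf X Y) = HP \<Psi> (pairs r \<Lambda> - pairs r S) X"
  proof (rule HP_cong)
    fix u v assume "(u, v) \<in> pairs r \<Lambda> - pairs r S"
    then have "u \<notin> S" "v \<notin> S" using pairs_rest by fastforce+
    then show "(inf X Y) u = X u \<and> (inf X Y) v = X v" using le by (auto simp: inf_min min_def)
  qed
  show ?thesis
    using HP_split[OF f sub, of \<Psi> "inf X Y"] HP_split[OF f sub, of \<Psi> X] c HP_submod[OF adm, of "pairs r S" X Y]
    by linarith
qed


lemma psi_cont:
  assumes "admissible_potential r \<Psi>"
  shows "continuous_on UNIV (\<Psi> k)"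
proof -
  have "C2 (\<Psi> k)" using assms unfolding admissible_potential_def by blast
  then obtain f' where "\<And>x. (\<Psi> k has_real_derivative f' x) (at x)" unfolding C2_def by blast
  then show ?thesis by (meson DERIV_continuous continuous_at_imp_continuous_on)
qed

lemma psi_meas:
  assumes "admissible_potential r \<Psi>"
  shows "\<Psi> k \<in> borel_measurable borel"
  using psi_cont[OF assms] by (rule borel_measurable_continuous_onI)

lemma ext_meas:
  assumes "S \<subseteq> I"
  shows "(\<lambda>x. ext_bc b S x u) \<in> borel_measurable (PiM I (\<lambda>_. lborel))"
proof (cases "u \<in> S")
  case True
  then have "u \<in> I" using assms by auto
  then show ?thesis using True unfolding ext_bc_def by simp
next
  case False then show ?thesis unfolding ext_bc_def by simp
qed

lemma HP_meas:
  assumes adm: "admissible_potential r \<Psi>" and "S \<subseteq> I"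
  shows "(\<lambda>x. HP \<Psi> P (ext_bc b S x)) \<in> borel_measurable (PiM I (\<lambda>_. lborel))"
proof -
  have "(\<lambda>x. \<Psi> k (ext_bc b S x u - ext_bc b S x v)) \<in> borel_measurable (PiM I (\<lambda>_. lborel))" for k u v
    using measurable_compose[OF borel_measurable_diff[OF ext_meas[OF assms(2)] ext_meas[OF assms(2)]] psi_meas[OF adm]]
    by simp
  then show ?thesis unfolding HP_def
    by (intro borel_measurable_times borel_measurable_const borel_measurable_sum) (auto split: prod.splits)
qed

lemma w_meas:
  assumes adm: "admissible_potential r \<Psi>" and "S \<subseteq> I"
  shows "(\<lambda>x. ennreal (exp (- HP \<Psi> P (ext_bc b S x)))) \<in> borel_measurable (PiM I (\<lambda>_. lborel))"
  using HP_meas[OF assms] by measurable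


lemma gauss_fin:
  fixes \<epsilon> :: real
  assumes "\<epsilon> > 0"
  shows "(\<integral>\<^sup>+t. ennreal (exp (- \<epsilon> * t\<^sup>2)) \<partial>lborel) < \<infinity>"
proof -
  define \<sigma> where "\<sigma> = sqrt (1 / (2 * \<epsilon>))"
  have sp: "\<sigma> > 0" using assms unfolding \<sigma>_def by simp
  have s2: "\<sigma>\<^sup>2 = 1 / (2 * \<epsilon>)" using assms unfolding \<sigma>_def by simp
  define C where "C = sqrt (2 * pi * \<sigma>\<^sup>2)"
  have Cp: "C > 0" using sp unfolding C_def by simp
  have eq: "exp (- \<epsilon> * t\<^sup>2) = C * normal_density 0 \<sigma> t" for t
  proof -
    have "- (t - 0)\<^sup>2 / (2 * \<sigma>\<^sup>2) = - \<epsilon> * t\<^sup>2" using assms unfolding s2 by (simp add: field_simps)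
    then show ?thesis unfolding normal_density_def C_def using Cp C_def sp by simp
  qed
  have "(\<integral>\<^sup>+t. ennreal (exp (- \<epsilon> * t\<^sup>2)) \<partial>lborel) = (\<integral>\<^sup>+t. ennreal C * ennreal (normal_density 0 \<sigma> t) \<partial>lborel)"
    unfolding eq using Cp by (simp add: ennreal_mult)
  also have "\<dots> = ennreal C * (\<integral>\<^sup>+t. ennreal (normal_density 0 \<sigma> t) \<partial>lborel)"
    by (rule nn_integral_cmult) simp
  also have "(\<integral>\<^sup>+t. ennreal (normal_density 0 \<sigma> t) \<partial>lborel) = ennreal (\<integral>t. normal_density 0 \<sigma> t \<partial>lborel)"
    by (rule nn_integral_eq_integral) (use sp in auto)
  also have "(\<integral>t. normal_density 0 \<sigma> t \<partial>lborel) = 1" using sp by simp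
  finally show ?thesis by simp
qed

lemma deriv_zero_fun: "deriv (\<lambda>_::real. 0::real) = (\<lambda>_. 0)"
  by (rule ext, rule DERIV_imp_deriv, rule DERIV_const)

lemma J_small:
  assumes adm: "admissible_potential r \<Psi>" and c: "c > 0" and j: "j \<in> jumps \<Psi> c"
  shows "norminf j \<le> int r"
proof (rule ccontr)
  assume "\<not> norminf j \<le> int r"
  then have "norm1 j > int r" unfolding norminf_def norm1_def by linarith
  then have "\<forall>x. \<Psi> j x = 0" using adm unfolding admissible_potential_def by blast
  then have "\<Psi> j = (\<lambda>_. 0)" by auto
  then have "deriv (deriv (\<Psi> j)) 0 = 0" by (simp add: deriv_zero_fun)
  moreover have "c \<le> deriv (deriv (\<Psi> j)) 0" using j unfolding jumps_def by blast
  ultimately show False using c by simp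
qed

definition Qf :: "nat \<Rightarrow> site set \<Rightarrow> site set \<Rightarrow> config \<Rightarrow> real" where
  "Qf r J L X = (\<Sum>p\<in>{p \<in> pairs r L. site_diff (snd p) (fst p) \<in> J}. (X (fst p) - X (snd p))\<^sup>2)"

lemma Qf_nonneg: "Qf r J L X \<ge> 0"
  unfolding Qf_def by (intro sum_nonneg) auto

lemma step_bound:
  assumes "finite L" and z: "\<And>w. w \<notin> L \<Longrightarrow> X w = 0" and "j \<in> J" and Jr: "\<And>j. j \<in> J \<Longrightarrow> norminf j \<le> int r"
  shows "(X u - X (site_add u j))\<^sup>2 \<le> Qf r J L X"
proof -
  let ?v = "site_add u j"
  have sd: "site_diff ?v u = j" unfolding site_diff_def site_add_def by simp
  show ?thesis
  proof (cases "(u \<notin> L \<and> ?v \<notin> L) \<or> u = ?v")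
    case True
    then have "X u = X ?v" using z by metis
    then show ?thesis using Qf_nonneg by simp
  next
    case False
    then have "(u, ?v) \<in> {p \<in> pairs r L. site_diff (snd p) (fst p) \<in> J}"
      unfolding pairs_def using sd Jr[OF \<open>j \<in> J\<close>] \<open>j \<in> J\<close> by auto
    moreover have "finite {p \<in> pairs r L. site_diff (snd p) (fst p) \<in> J}"
      using finite_pairs[OF assms(1)] by simp
    ultimately have "(\<lambda>p. (X (fst p) - X (snd p))\<^sup>2) (u, ?v) \<le> (\<Sum>p\<in>{p \<in> pairs r L. site_diff (snd p) (fst p) \<in> J}. (\<lambda>p. (X (fst p) - X (snd p))\<^sup>2) p)"
      by (intro member_le_sum) auto
    then show ?thesis unfolding Qf_def by simp
  qed
qed

lemma sq_tri: "((a::real) - c)\<^sup>2 \<le> 2 * (a - b)\<^sup>2 + 2 * (b - c)\<^sup>2"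
proof -
  have "0 \<le> (a - 2 * b + c)\<^sup>2" by simp
  then show ?thesis by (simp add: power2_eq_square algebra_simps)
qed

lemma path_bound:
  assumes "finite L" and Jr: "\<And>j. j \<in> J \<Longrightarrow> norminf j \<le> int r"
    and "(x, y) \<in> {(u, site_add u j) | u j. j \<in> J}\<^sup>*"
  shows "\<exists>K\<ge>0. \<forall>X. (\<forall>w. w \<notin> L \<longrightarrow> X w = 0) \<longrightarrow> (X x - X y)\<^sup>2 \<le> K * Qf r J L X"
  using assms(3)
proof (induction rule: rtrancl_induct)
  case base
  show ?case by (rule exI[of _ 0]) (simp add: Qf_nonneg)
next
  case (step z w)
  from step.IH obtain K where K: "K \<ge> 0" "\<forall>X. (\<forall>w. w \<notin> L \<longrightarrow> X w = 0) \<longrightarrow> (X x - X z)\<^sup>2 \<le> K * Qf r J L X"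
    by blast
  from step.hyps(2) obtain j where j: "j \<in> J" "w = site_add z j" by blast
  show ?case
  proof (rule exI[of _ "2 * K + 2"], intro conjI allI impI)
    show "0 \<le> 2 * K + 2" using K by simp
    fix X :: config assume X: "\<forall>w. w \<notin> L \<longrightarrow> X w = 0"
    have "(X z - X w)\<^sup>2 \<le> Qf r J L X" unfolding j(2) by (rule step_bound[OF assms(1) _ j(1) Jr]) (use X in auto)
    moreover have "(X x - X z)\<^sup>2 \<le> K * Qf r J L X" using K X by blast
    ultimately show "(X x - X w)\<^sup>2 \<le> (2 * K + 2) * Qf r J L X"
      using sq_tri[of "X x" "X w" "X z"] by (simp add: algebra_simps)
  qed
qed

lemma HP_lower:
  assumes adm: "admissible_potential r \<Psi>" and "finite L"
  shows "HP \<Psi> (pairs r L) X \<ge> (1/2) * (\<Sum>(i, j)\<in>pairs r L. \<Psi> (site_diff j i) 0) + c / 4 * Qf r (jumps \<Psi> c) L X"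
proof -
  let ?P = "pairs r L" and ?J = "jumps \<Psi> c"
  have f: "finite ?P" by (rule finite_pairs[OF assms(2)])
  have "(\<Sum>p\<in>?P. (case p of (i, j) \<Rightarrow> \<Psi> (site_diff j i) 0) + (if site_diff (snd p) (fst p) \<in> ?J then c / 2 * (X (fst p) - X (snd p))\<^sup>2 else 0))
     \<le> (\<Sum>p\<in>?P. (case p of (i, j) \<Rightarrow> \<Psi> (site_diff j i) (X i - X j)))"
  proof (rule sum_mono)
    fix p assume "p \<in> ?P"
    obtain i j where p: "p = (i, j)" by (cases p)
    show "(case p of (i, j) \<Rightarrow> \<Psi> (site_diff j i) 0) + (if site_diff (snd p) (fst p) \<in> ?J then c / 2 * (X (fst p) - X (snd p))\<^sup>2 else 0)
       \<le> (case p of (i, j) \<Rightarrow> \<Psi> (site_diff j i) (X i - X j))"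
      unfolding p using psi_ge0[OF adm, of "site_diff j i" "X i - X j"] psi_quad[OF adm, of "site_diff j i" c "X i - X j"]
      by auto
  qed
  moreover have "(\<Sum>p\<in>?P. (if site_diff (snd p) (fst p) \<in> ?J then c / 2 * (X (fst p) - X (snd p))\<^sup>2 else 0))
      = c / 2 * Qf r ?J L X"
  proof -
    have "(\<Sum>p\<in>?P. (if site_diff (snd p) (fst p) \<in> ?J then c / 2 * (X (fst p) - X (snd p))\<^sup>2 else 0))
      = (\<Sum>p\<in>?P. c / 2 * (if site_diff (snd p) (fst p) \<in> ?J then (X (fst p) - X (snd p))\<^sup>2 else 0))"
      by (rule sum.cong) auto
    also have "\<dots> = c / 2 * (\<Sum>p\<in>?P. (if site_diff (snd p) (fst p) \<in> ?J then (X (fst p) - X (snd p))\<^sup>2 else 0))"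
      by (simp add: sum_distrib_left)
    also have "(\<Sum>p\<in>?P. (if site_diff (snd p) (fst p) \<in> ?J then (X (fst p) - X (snd p))\<^sup>2 else 0)) = Qf r ?J L X"
      unfolding Qf_def by (rule sum.inter_filter[OF f, symmetric])
    finally show ?thesis .
  qed
  ultimately show ?thesis unfolding HP_def sum.distrib by simp
qed


lemma infinite_site: "\<not> finite (UNIV :: site set)"
  by (simp add: finite_prod infinite_UNIV_int)

lemma Z_finite:
  assumes adm: "admissible_potential r \<Psi>" and fin: "finite L"
  shows "(\<integral>\<^sup>+x. ennreal (exp (- HP \<Psi> (pairs r L) (ext_bc 0 L x))) \<partial>PiM L (\<lambda>_. lborel)) < \<infinity>"
proof -
  obtain c where c: "c > 0" "irreducible_walk (jumps \<Psi> c)" using adm unfolding admissible_potential_def by blast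
  define J where "J = jumps \<Psi> c"
  have Jr: "\<And>j. j \<in> J \<Longrightarrow> norminf j \<le> int r" unfolding J_def using J_small[OF adm c(1)] by blast
  obtain y0 where y0: "y0 \<notin> L" using ex_new_if_finite[OF infinite_site fin] by blast
  have "\<forall>u. \<exists>K\<ge>0. \<forall>X. (\<forall>w. w \<notin> L \<longrightarrow> X w = 0) \<longrightarrow> (X u - X y0)\<^sup>2 \<le> K * Qf r J L X"
  proof
    fix u
    have uy: "(u, y0) \<in> {(u, site_add u j) | u j. j \<in> J}\<^sup>*" using c(2) unfolding irreducible_walk_def J_def by blast
    show "\<exists>K\<ge>0. \<forall>X. (\<forall>w. w \<notin> L \<longrightarrow> X w = 0) \<longrightarrow> (X u - X y0)\<^sup>2 \<le> K * Qf r J L X"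
      using path_bound[OF fin Jr uy] by blast
  qed
  then obtain Kf where Kf: "\<And>u. Kf u \<ge> 0" "\<And>u X. (\<forall>w. w \<notin> L \<longrightarrow> X w = 0) \<Longrightarrow> (X u - X y0)\<^sup>2 \<le> Kf u * Qf r J L X"
    by metis
  define K where "K = 1 + (\<Sum>u\<in>L. Kf u)"
  have K: "K \<ge> 1" unfolding K_def using Kf(1) by (simp add: sum_nonneg)
  define \<epsilon> where "\<epsilon> = c / (4 * K)"
  have ep: "\<epsilon> > 0" unfolding \<epsilon>_def using c K by simp
  define C0 where "C0 = (1/2) * (\<Sum>(i, j)\<in>pairs r L. \<Psi> (site_diff j i) 0)"
  have pw: "exp (- HP \<Psi> (pairs r L) (ext_bc 0 L x)) \<le> exp (- C0) * (\<Prod>u\<in>L. exp (- \<epsilon> * (x u)\<^sup>2))" for x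
  proof -
    let ?X = "ext_bc 0 L x"
    have z: "\<forall>w. w \<notin> L \<longrightarrow> ?X w = 0" unfolding ext_bc_def by simp
    have X0: "?X y0 = 0" using y0 unfolding ext_bc_def by simp
    have "(\<Sum>u\<in>L. (x u)\<^sup>2) \<le> (\<Sum>u\<in>L. Kf u * Qf r J L ?X)"
    proof (rule sum_mono)
      fix u assume "u \<in> L"
      then have "x u = ?X u - ?X y0" using X0 unfolding ext_bc_def by simp
      then show "(x u)\<^sup>2 \<le> Kf u * Qf r J L ?X" using Kf(2)[OF z, of u] by simp
    qed
    also have "\<dots> = (\<Sum>u\<in>L. Kf u) * Qf r J L ?X" by (simp add: sum_distrib_right)
    also have "\<dots> \<le> K * Qf r J L ?X" unfolding K_def using Qf_nonneg[of r J L ?X] by (simp add: algebra_simps)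
    finally have s: "(\<Sum>u\<in>L. (x u)\<^sup>2) \<le> K * Qf r J L ?X" .
    have "\<epsilon> * (\<Sum>u\<in>L. (x u)\<^sup>2) \<le> \<epsilon> * (K * Qf r J L ?X)" using s ep by simp
    also have "\<epsilon> * (K * Qf r J L ?X) = c / 4 * Qf r J L ?X" unfolding \<epsilon>_def using K by simp
    finally have s2: "\<epsilon> * (\<Sum>u\<in>L. (x u)\<^sup>2) \<le> c / 4 * Qf r J L ?X" .
    have "HP \<Psi> (pairs r L) ?X \<ge> C0 + c / 4 * Qf r J L ?X" unfolding C0_def J_def by (rule HP_lower[OF adm fin])
    then have "- HP \<Psi> (pairs r L) ?X \<le> - C0 + (\<Sum>u\<in>L. - \<epsilon> * (x u)\<^sup>2)"
      using s2 by (simp add: sum_distrib_left sum_negf)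
    then have "exp (- HP \<Psi> (pairs r L) ?X) \<le> exp (- C0 + (\<Sum>u\<in>L. - \<epsilon> * (x u)\<^sup>2))" by simp
    also have "\<dots> = exp (- C0) * exp (\<Sum>u\<in>L. - \<epsilon> * (x u)\<^sup>2)" by (rule exp_add)
    also have "exp (\<Sum>u\<in>L. - \<epsilon> * (x u)\<^sup>2) = (\<Prod>u\<in>L. exp (- \<epsilon> * (x u)\<^sup>2))" by (rule exp_sum[OF fin])
    finally show ?thesis .
  qed
  interpret product_sigma_finite "\<lambda>_::site. lborel :: real measure" by standard
  have "(\<integral>\<^sup>+x. ennreal (exp (- HP \<Psi> (pairs r L) (ext_bc 0 L x))) \<partial>PiM L (\<lambda>_. lborel))
      \<le> (\<integral>\<^sup>+x. ennreal (exp (- C0)) * (\<Prod>u\<in>L. ennreal (exp (- \<epsilon> * (x u)\<^sup>2))) \<partial>PiM L (\<lambda>_. lborel))"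
  proof (intro nn_integral_mono)
    fix x
    have "ennreal (exp (- C0)) * (\<Prod>u\<in>L. ennreal (exp (- \<epsilon> * (x u)\<^sup>2))) = ennreal (exp (- C0) * (\<Prod>u\<in>L. exp (- \<epsilon> * (x u)\<^sup>2)))"
      by (simp add: ennreal_mult prod_ennreal prod_nonneg)
    then show "ennreal (exp (- HP \<Psi> (pairs r L) (ext_bc 0 L x))) \<le> ennreal (exp (- C0)) * (\<Prod>u\<in>L. ennreal (exp (- \<epsilon> * (x u)\<^sup>2)))"
      using ennreal_leI[OF pw[of x]] by simp
  qed
  also have "\<dots> = ennreal (exp (- C0)) * (\<integral>\<^sup>+x. (\<Prod>u\<in>L. ennreal (exp (- \<epsilon> * (x u)\<^sup>2))) \<partial>PiM L (\<lambda>_. lborel))"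
    by (rule nn_integral_cmult) measurable
  also have "(\<integral>\<^sup>+x. (\<Prod>u\<in>L. ennreal (exp (- \<epsilon> * (x u)\<^sup>2))) \<partial>PiM L (\<lambda>_. lborel))
      = (\<Prod>u\<in>L. \<integral>\<^sup>+t. ennreal (exp (- \<epsilon> * t\<^sup>2)) \<partial>lborel)"
    by (rule product_nn_integral_prod[OF fin]) measurable
  also have "ennreal (exp (- C0)) * (\<Prod>u\<in>L. \<integral>\<^sup>+t. ennreal (exp (- \<epsilon> * t\<^sup>2)) \<partial>lborel) < \<infinity>"
    using gauss_fin[OF ep] by (simp add: ennreal_mult_less_top power_less_top_ennreal)
  finally show ?thesis .
qed


lemma trans_inv:
  fixes S :: "'i set" and b :: real
  assumes "finite S"
  shows "f \<in> borel_measurable (PiM S (\<lambda>_. lborel)) \<Longrightarrow>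
    (\<integral>\<^sup>+x. f (\<lambda>i\<in>S. x i + b) \<partial>PiM S (\<lambda>_. lborel)) = (\<integral>\<^sup>+x. f x \<partial>PiM S (\<lambda>_. lborel))"
  using assms
proof (induction S arbitrary: f rule: finite_induct)
  case empty
  show ?case by (simp add: PiM_empty nn_integral_count_space_finite)
next
  case (insert k S)
  interpret product_sigma_finite "\<lambda>_::'i. lborel :: real measure" by standard
  let ?M = "PiM S (\<lambda>_. lborel :: real measure)"
  let ?sh = "\<lambda>x. \<lambda>i\<in>S. x i + b"
  have fm: "f \<in> borel_measurable (PiM (insert k S) (\<lambda>_. lborel))" by fact
  have shm: "(\<lambda>x. f (\<lambda>i\<in>insert k S. x i + b)) \<in> borel_measurable (PiM (insert k S) (\<lambda>_. lborel))"
    by (rule measurable_compose[OF _ fm]) measurable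
  define h where "h y = (\<integral>\<^sup>+t. f (y(k := t)) \<partial>lborel)" for y
  have hm: "h \<in> borel_measurable ?M" unfolding h_def[abs_def] by (rule meas_slice[OF insert(2) fm])
  have "(\<integral>\<^sup>+x. f (\<lambda>i\<in>insert k S. x i + b) \<partial>PiM (insert k S) (\<lambda>_. lborel))
      = (\<integral>\<^sup>+x. (\<integral>\<^sup>+t. f (\<lambda>i\<in>insert k S. (x(k := t)) i + b) \<partial>lborel) \<partial>?M)"
    by (rule product_nn_integral_insert[OF insert(1,2) shm])
  also have "\<dots> = (\<integral>\<^sup>+x. h (?sh x) \<partial>?M)"
  proof (rule nn_integral_cong)
    fix x assume x: "x \<in> space ?M"
    have sx: "?sh x \<in> space ?M" by (auto simp: space_PiM)
    have eq: "(\<lambda>i\<in>insert k S. (x(k := t)) i + b) = (?sh x)(k := t + b)" for t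
      using insert(2) by (auto simp: fun_eq_iff restrict_def)
    have m1: "(\<lambda>t. f ((?sh x)(k := t))) \<in> borel_measurable borel" by (rule meas_slice1[OF insert(2) fm sx])
    have "(\<integral>\<^sup>+t. f ((?sh x)(k := t)) \<partial>lborel) = ennreal \<bar>1\<bar> * (\<integral>\<^sup>+t. f ((?sh x)(k := b + 1 * t)) \<partial>lborel)"
      by (rule nn_integral_real_affine[OF m1]) simp
    then show "(\<integral>\<^sup>+t. f (\<lambda>i\<in>insert k S. (x(k := t)) i + b) \<partial>lborel) = h (?sh x)"
      unfolding eq h_def by (simp add: add.commute)
  qed
  also have "\<dots> = (\<integral>\<^sup>+x. h x \<partial>?M)" by (rule insert.IH[OF hm])
  also have "\<dots> = (\<integral>\<^sup>+x. f x \<partial>PiM (insert k S) (\<lambda>_. lborel))"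
    unfolding h_def by (rule product_nn_integral_insert[OF insert(1,2) fm, symmetric])
  finally show ?case .
qed

lemma fact_int:
  fixes S A :: "'i set"
  assumes "finite S" "finite A" "S \<inter> A = {}"
    and [measurable]: "F \<in> borel_measurable (PiM S (\<lambda>_. lborel))" "G \<in> borel_measurable (PiM A (\<lambda>_. lborel))"
  shows "(\<integral>\<^sup>+x. F (restrict x S) * G (restrict x A) \<partial>PiM (S \<union> A) (\<lambda>_. lborel))
       = (\<integral>\<^sup>+x. F x \<partial>PiM S (\<lambda>_. lborel)) * (\<integral>\<^sup>+x. G x \<partial>PiM A (\<lambda>_. lborel :: real measure))"
proof -
  interpret product_sigma_finite "\<lambda>_::'i. lborel :: real measure" by standard
  have m: "(\<lambda>x. F (restrict x S) * G (restrict x A)) \<in> borel_measurable (PiM (S \<union> A) (\<lambda>_. lborel))"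
  proof -
    have [measurable]: "(\<lambda>x. F (restrict x S)) \<in> borel_measurable (PiM (S \<union> A) (\<lambda>_. lborel))"
      using measurable_compose[OF measurable_restrict_subset[of S "S \<union> A"] assms(4)] by simp
    have [measurable]: "(\<lambda>x. G (restrict x A)) \<in> borel_measurable (PiM (S \<union> A) (\<lambda>_. lborel))"
      using measurable_compose[OF measurable_restrict_subset[of A "S \<union> A"] assms(5)] by simp
    show ?thesis by measurable
  qed
  have "(\<integral>\<^sup>+x. F (restrict x S) * G (restrict x A) \<partial>PiM (S \<union> A) (\<lambda>_. lborel))
    = (\<integral>\<^sup>+x. (\<integral>\<^sup>+y. F (restrict (merge S A (x, y)) S) * G (restrict (merge S A (x, y)) A) \<partial>PiM A (\<lambda>_. lborel)) \<partial>PiM S (\<lambda>_. lborel))"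
    by (rule product_nn_integral_fold[OF assms(3,1,2) m])
  also have "\<dots> = (\<integral>\<^sup>+x. F x * (\<integral>\<^sup>+y. G y \<partial>PiM A (\<lambda>_. lborel)) \<partial>PiM S (\<lambda>_. lborel))"
  proof (rule nn_integral_cong)
    fix x assume x: "x \<in> space (PiM S (\<lambda>_. lborel :: real measure))"
    have "(\<integral>\<^sup>+y. F (restrict (merge S A (x, y)) S) * G (restrict (merge S A (x, y)) A) \<partial>PiM A (\<lambda>_. lborel))
        = (\<integral>\<^sup>+y. F x * G y \<partial>PiM A (\<lambda>_. lborel))"
    proof (rule nn_integral_cong)
      fix y assume y: "y \<in> space (PiM A (\<lambda>_. lborel :: real measure))"
      have "restrict x S = x" using x by (simp add: space_PiM PiE_def extensional_restrict)
      moreover have "restrict y A = y" using y by (simp add: space_PiM PiE_def extensional_restrict)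
      ultimately show "F (restrict (merge S A (x, y)) S) * G (restrict (merge S A (x, y)) A) = F x * G y"
        using assms(3) by simp
    qed
    also have "\<dots> = F x * (\<integral>\<^sup>+y. G y \<partial>PiM A (\<lambda>_. lborel))" by (rule nn_integral_cmult) simp
    finally show "(\<integral>\<^sup>+y. F (restrict (merge S A (x, y)) S) * G (restrict (merge S A (x, y)) A) \<partial>PiM A (\<lambda>_. lborel))
        = F x * (\<integral>\<^sup>+y. G y \<partial>PiM A (\<lambda>_. lborel))" .
  qed
  also have "\<dots> = (\<integral>\<^sup>+x. F x \<partial>PiM S (\<lambda>_. lborel)) * (\<integral>\<^sup>+x. G x \<partial>PiM A (\<lambda>_. lborel))"
    by (rule nn_integral_multc) simp
  finally show ?thesis .
qed

lemma box_int:
  fixes A :: "'i set"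
  assumes "finite A"
  shows "(\<integral>\<^sup>+x. (\<Prod>j\<in>A. indicator {c..c+1} (x j)) \<partial>PiM A (\<lambda>_. lborel :: real measure)) = (1::ennreal)"
proof -
  interpret product_sigma_finite "\<lambda>_::'i. lborel :: real measure" by standard
  have "(\<integral>\<^sup>+x. (\<Prod>j\<in>A. indicator {c..c+1} (x j)) \<partial>PiM A (\<lambda>_. lborel :: real measure))
      = (\<Prod>j\<in>A. \<integral>\<^sup>+t. indicator {c..c+1} t \<partial>lborel)"
    by (rule product_nn_integral_prod[OF assms]) simp
  also have "\<dots> = 1" by simp
  finally show ?thesis .
qed


lemma ext_bc_meas:
  assumes "S \<subseteq> L"
  shows "ext_bc b S \<in> measurable (PiM L (\<lambda>_. lborel)) (PiM UNIV (\<lambda>_. borel :: real measure))"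
proof -
  have eq: "ext_bc b S = (\<lambda>x u. ext_bc b S x u)" by simp
  show ?thesis
    apply (subst eq)
    apply (rule measurable_PiM_single')
    using ext_meas[OF assms] by auto
qed

lemma gibbs_emeasure:
  assumes adm: "admissible_potential r \<Psi>" and fin: "finite L"
    and U: "U \<in> sets (PiM UNIV (\<lambda>_. borel :: real measure))"
  shows "emeasure (gibbs r \<Psi> L 0) U =
    (\<integral>\<^sup>+x. ennreal (exp (- HP \<Psi> (pairs r L) (ext_bc 0 L x))) * indicator U (ext_bc 0 L x) \<partial>PiM L (\<lambda>_. lborel)) / part_fun r \<Psi> L 0"
proof -
  let ?M = "PiM L (\<lambda>_. lborel :: real measure)"
  let ?w = "\<lambda>x. ennreal (exp (- HP \<Psi> (pairs r L) (ext_bc 0 L x)))"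
  let ?Z = "part_fun r \<Psi> L 0"
  let ?g = "\<lambda>x. ?w x / ?Z"
  have wm: "?w \<in> borel_measurable ?M" by (rule w_meas[OF adm order_refl])
  have gm: "?g \<in> borel_measurable ?M" using wm by measurable
  have em: "ext_bc 0 L \<in> measurable ?M (PiM UNIV (\<lambda>_. borel :: real measure))" by (rule ext_bc_meas) simp
  have em': "ext_bc 0 L \<in> measurable (density ?M ?g) (PiM UNIV (\<lambda>_. borel :: real measure))"
    using em measurable_cong_sets[OF sets_density refl] by blast
  have gibbs_eq: "gibbs r \<Psi> L 0 = distr (density ?M ?g) (PiM UNIV (\<lambda>_. borel)) (ext_bc 0 L)"
    unfolding gibbs_def ham_HP ..
  have Us: "ext_bc 0 L -` U \<inter> space ?M \<in> sets ?M" by (rule measurable_sets[OF em U])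
  have "emeasure (gibbs r \<Psi> L 0) U = emeasure (density ?M ?g) (ext_bc 0 L -` U \<inter> space ?M)"
    unfolding gibbs_eq by (subst emeasure_distr[OF em' U]) simp
  also have "\<dots> = (\<integral>\<^sup>+x. ?g x * indicator (ext_bc 0 L -` U \<inter> space ?M) x \<partial>?M)"
    by (rule emeasure_density[OF gm Us])
  also have "\<dots> = (\<integral>\<^sup>+x. (?w x * indicator U (ext_bc 0 L x)) / ?Z \<partial>?M)"
    by (rule nn_integral_cong) (auto simp: indicator_def divide_ennreal_def)
  also have "\<dots> = (\<integral>\<^sup>+x. ?w x * indicator U (ext_bc 0 L x) \<partial>?M) / ?Z"
  proof (rule nn_integral_divide)
    have "(\<lambda>x. indicator U (ext_bc 0 L x) :: ennreal) \<in> borel_measurable ?M"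
      using measurable_compose[OF em borel_measurable_indicator[OF U]] by simp
    then show "(\<lambda>x. ?w x * indicator U (ext_bc 0 L x)) \<in> borel_measurable ?M" using wm by measurable
  qed
  finally show ?thesis .
qed

lemma space_pos:
  fixes L :: "'i set"
  assumes "finite L"
  shows "emeasure (PiM L (\<lambda>_. lborel :: real measure)) (space (PiM L (\<lambda>_. lborel))) \<noteq> 0"
proof -
  interpret product_sigma_finite "\<lambda>_::'i. lborel :: real measure" by standard
  have "space (PiM L (\<lambda>_. lborel :: real measure)) = PiE L (\<lambda>_. UNIV)" by (simp add: space_PiM)
  then show ?thesis using emeasure_PiM[OF assms, of "\<lambda>_. UNIV"] by simp
qed

lemma int_pos:
  assumes "f \<in> borel_measurable M" "\<And>x. x \<in> space M \<Longrightarrow> f x > 0" "emeasure M (space M) \<noteq> 0"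
  shows "(\<integral>\<^sup>+x. f x \<partial>M) > 0"
proof (rule ccontr)
  assume "\<not> (\<integral>\<^sup>+x. f x \<partial>M) > 0"
  then have "(\<integral>\<^sup>+x. f x \<partial>M) = 0" by (simp add: zero_less_iff_neq_zero)
  then have "AE x in M. f x = 0" using nn_integral_0_iff_AE[OF assms(1)] by simp
  moreover have "AE x in M. x \<in> space M" by (rule AE_space)
  ultimately have "AE x in M. False" by eventually_elim (use assms(2) in force)
  then have "ae_filter M = bot" using trivial_limit_def by blast
  then show False using assms(3) ae_filter_eq_bot_iff by blast
qed

lemma shift_S:
  assumes adm: "admissible_potential r \<Psi>" and fin: "finite S" and iS: "i \<in> S"
  shows "(\<integral>\<^sup>+x. ennreal (exp (- HP \<Psi> (pairs r S) (ext_bc b S x))) * (if t < x i then 1 else 0) \<partial>PiM S (\<lambda>_. lborel))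
       = (\<integral>\<^sup>+x. ennreal (exp (- HP \<Psi> (pairs r S) (ext_bc 0 S x))) * (if t - b < x i then 1 else 0) \<partial>PiM S (\<lambda>_. lborel))"
proof -
  let ?f = "\<lambda>x. ennreal (exp (- HP \<Psi> (pairs r S) (ext_bc b S x))) * (if t < x i then 1 else 0 :: ennreal)"
  have wm: "(\<lambda>x. ennreal (exp (- HP \<Psi> (pairs r S) (ext_bc b S x)))) \<in> borel_measurable (PiM S (\<lambda>_. lborel))"
    by (rule w_meas[OF adm order_refl])
  have fm: "?f \<in> borel_measurable (PiM S (\<lambda>_. lborel))" using wm iS by measurable
  have "(\<integral>\<^sup>+x. ?f x \<partial>PiM S (\<lambda>_. lborel)) = (\<integral>\<^sup>+x. ?f (\<lambda>u\<in>S. x u + b) \<partial>PiM S (\<lambda>_. lborel))"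
    by (rule trans_inv[OF fin fm, symmetric])
  also have "\<dots> = (\<integral>\<^sup>+x. ennreal (exp (- HP \<Psi> (pairs r S) (ext_bc 0 S x))) * (if t - b < x i then 1 else 0) \<partial>PiM S (\<lambda>_. lborel))"
  proof (rule nn_integral_cong)
    fix x
    have "ext_bc b S (\<lambda>u\<in>S. x u + b) = (\<lambda>u. ext_bc 0 S x u + b)" by (auto simp: ext_bc_def fun_eq_iff)
    then have "HP \<Psi> (pairs r S) (ext_bc b S (\<lambda>u\<in>S. x u + b)) = HP \<Psi> (pairs r S) (ext_bc 0 S x)"
      by (simp add: HP_shift)
    moreover have "(t < (\<lambda>u\<in>S. x u + b) i) = (t - b < x i)" using iS by auto
    ultimately show "?f (\<lambda>u\<in>S. x u + b) = ennreal (exp (- HP \<Psi> (pairs r S) (ext_bc 0 S x))) * (if t - b < x i then 1 else 0)"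
      by simp
  qed
  finally show ?thesis .
qed


lemma prod_ind:
  assumes "finite A"
  shows "(\<Prod>j\<in>A. indicator (B j) (x j) :: ennreal) = (if \<forall>j\<in>A. x j \<in> B j then 1 else 0)"
  using assms by (induction A rule: finite_induct) (auto simp: indicator_def)

lemma core_lower:
  assumes adm: "admissible_potential r \<Psi>" and fin: "finite \<Lambda>" and AL: "A \<subseteq> \<Lambda>" and S: "S = \<Lambda> - A"
    and a: "a > 0" and x: "\<forall>j\<in>A. x j \<le> - a" and y: "\<forall>j\<in>A. - a \<le> y j"
  shows "HP \<Psi> (pairs r \<Lambda>) (ext_bc 0 \<Lambda> (sup x y)) + HP \<Psi> (pairs r S) (ext_bc (-a) S (inf x y))
       \<le> HP \<Psi> (pairs r S) (ext_bc (-a) S x) + HP \<Psi> (pairs r \<Lambda>) (ext_bc 0 \<Lambda> y)"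
proof -
  let ?X = "ext_bc (-a) S x" and ?Y = "ext_bc 0 \<Lambda> y"
  have xy: "\<forall>j\<in>A. x j \<le> y j" using x y by (meson order_trans)
  have V: "ext_bc 0 \<Lambda> (sup x y) = sup ?X ?Y"
  proof
    fix u show "ext_bc 0 \<Lambda> (sup x y) u = sup ?X ?Y u"
      using x y xy a S AL by (cases "u \<in> S"; cases "u \<in> A"; cases "u \<in> \<Lambda>") (auto simp: ext_bc_def sup_max max_def)
  qed
  have W: "ext_bc (-a) S (inf x y) = inf ?X ?Y"
  proof
    fix u show "ext_bc (-a) S (inf x y) u = inf ?X ?Y u"
      using x y xy a S AL by (cases "u \<in> S"; cases "u \<in> A"; cases "u \<in> \<Lambda>") (auto simp: ext_bc_def inf_min min_def)
  qed
  have le: "?X u \<le> ?Y u" if "u \<notin> S" for u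
    using that x y xy a S AL by (cases "u \<in> A"; cases "u \<in> \<Lambda>") (auto simp: ext_bc_def)
  show ?thesis unfolding V W by (rule ham_lower[OF adm fin _ le]) (use S in auto)
qed

lemma core_upper:
  assumes adm: "admissible_potential r \<Psi>" and fin: "finite \<Lambda>" and AL: "A \<subseteq> \<Lambda>" and S: "S = \<Lambda> - A"
    and a: "a > 0" and x: "\<forall>j\<in>A. x j \<le> a" and y: "\<forall>j\<in>A. a \<le> y j"
  shows "HP \<Psi> (pairs r S) (ext_bc a S (sup x y)) + HP \<Psi> (pairs r \<Lambda>) (ext_bc 0 \<Lambda> (inf x y))
       \<le> HP \<Psi> (pairs r \<Lambda>) (ext_bc 0 \<Lambda> x) + HP \<Psi> (pairs r S) (ext_bc a S y)"
proof -
  let ?X = "ext_bc 0 \<Lambda> x" and ?Y = "ext_bc a S y"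
  have xy: "\<forall>j\<in>A. x j \<le> y j" using x y by (meson order_trans)
  have V: "ext_bc a S (sup x y) = sup ?X ?Y"
  proof
    fix u show "ext_bc a S (sup x y) u = sup ?X ?Y u"
      using x y xy a S AL by (cases "u \<in> S"; cases "u \<in> A"; cases "u \<in> \<Lambda>") (auto simp: ext_bc_def sup_max max_def)
  qed
  have W: "ext_bc 0 \<Lambda> (inf x y) = inf ?X ?Y"
  proof
    fix u show "ext_bc 0 \<Lambda> (inf x y) u = inf ?X ?Y u"
      using x y xy a S AL by (cases "u \<in> S"; cases "u \<in> A"; cases "u \<in> \<Lambda>") (auto simp: ext_bc_def inf_min min_def)
  qed
  have le: "?X u \<le> ?Y u" if "u \<notin> S" for u
    using that x y xy a S AL by (cases "u \<in> A"; cases "u \<in> \<Lambda>") (auto simp: ext_bc_def)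
  show ?thesis unfolding V W by (rule ham_upper[OF adm fin _ le]) (use S in auto)
qed

lemma shift_S0:
  assumes adm: "admissible_potential r \<Psi>" and fin: "finite S"
  shows "(\<integral>\<^sup>+x. ennreal (exp (- HP \<Psi> (pairs r S) (ext_bc b S x))) \<partial>PiM S (\<lambda>_. lborel))
       = (\<integral>\<^sup>+x. ennreal (exp (- HP \<Psi> (pairs r S) (ext_bc 0 S x))) \<partial>PiM S (\<lambda>_. lborel))"
proof -
  let ?f = "\<lambda>x. ennreal (exp (- HP \<Psi> (pairs r S) (ext_bc b S x)))"
  have fm: "?f \<in> borel_measurable (PiM S (\<lambda>_. lborel))" by (rule w_meas[OF adm order_refl])
  have "(\<integral>\<^sup>+x. ?f x \<partial>PiM S (\<lambda>_. lborel)) = (\<integral>\<^sup>+x. ?f (\<lambda>u\<in>S. x u + b) \<partial>PiM S (\<lambda>_. lborel))"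
    by (rule trans_inv[OF fin fm, symmetric])
  also have "\<dots> = (\<integral>\<^sup>+x. ennreal (exp (- HP \<Psi> (pairs r S) (ext_bc 0 S x))) \<partial>PiM S (\<lambda>_. lborel))"
  proof (rule nn_integral_cong)
    fix x
    have "ext_bc b S (\<lambda>u\<in>S. x u + b) = (\<lambda>u. ext_bc 0 S x u + b)" by (auto simp: ext_bc_def fun_eq_iff)
    then show "?f (\<lambda>u\<in>S. x u + b) = ennreal (exp (- HP \<Psi> (pairs r S) (ext_bc 0 S x)))"
      by (simp add: HP_shift)
  qed
  finally show ?thesis .
qed

lemma prod_meas:
  assumes "A \<subseteq> L" "\<And>j. j \<in> A \<Longrightarrow> f j \<in> borel_measurable (lborel :: real measure)"
  shows "(\<lambda>x. \<Prod>j\<in>A. f j (x j) :: ennreal) \<in> borel_measurable (PiM L (\<lambda>_. lborel))"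
proof (rule borel_measurable_prod_ennreal)
  fix j assume j: "j \<in> A"
  then have "j \<in> L" using assms(1) by auto
  then show "(\<lambda>x. f j (x j)) \<in> borel_measurable (PiM L (\<lambda>_. lborel))"
    using measurable_compose[OF measurable_component_singleton[OF \<open>j \<in> L\<close>, where M="\<lambda>_. lborel"] assms(2)[OF j]] by simp
qed


lemma real_frac_le:
  fixes l z p e :: real
  assumes "z > 0" "e > 0" "l * e \<le> p * z"
  shows "l / z \<le> p / e"
proof -
  have "l / z = (l * e) / (z * e)" using assms by simp
  also have "\<dots> \<le> (p * z) / (z * e)" using assms by (intro divide_right_mono) auto
  also have "\<dots> = p / e" using assms by simp
  finally show ?thesis .
qed

lemma ennreal_obtain:
  fixes x :: ennreal
  assumes "x < \<infinity>"
  obtains r where "x = ennreal r" "0 \<le> r"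
  using assms by (cases x rule: ennreal_cases) auto

lemma arith_lower:
  fixes l z p e zl :: ennreal
  assumes fin: "l < \<infinity>" "z < \<infinity>" "p < \<infinity>" "e < \<infinity>" "zl < \<infinity>"
    and pos: "z > 0" "e > 0" "zl > 0" and ineq: "l * e \<le> p * z"
  shows "enn2real (l / z) \<le> enn2real (p / zl) / enn2real (e / zl)"
proof -
  obtain l' where l: "l = ennreal l'" "0 \<le> l'" using fin(1) by (rule ennreal_obtain)
  obtain z' where z: "z = ennreal z'" "0 \<le> z'" using fin(2) by (rule ennreal_obtain)
  obtain p' where p: "p = ennreal p'" "0 \<le> p'" using fin(3) by (rule ennreal_obtain)
  obtain e' where e: "e = ennreal e'" "0 \<le> e'" using fin(4) by (rule ennreal_obtain)
  obtain zl' where zl: "zl = ennreal zl'" "0 \<le> zl'" using fin(5) by (rule ennreal_obtain)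
  have ps: "z' > 0" "e' > 0" "zl' > 0" using pos unfolding z e zl by auto
  have "ennreal (l' * e') \<le> ennreal (p' * z')" using ineq unfolding l z p e by (simp add: ennreal_mult[symmetric] l(2) z(2) p(2) e(2))
  then have le: "l' * e' \<le> p' * z'" using p(2) z(2) by (simp add: ennreal_le_iff)
  have "l' / z' \<le> p' / e'" by (rule real_frac_le[OF ps(1,2) le])
  also have "p' / e' = (p' / zl') / (e' / zl')" using ps by simp
  finally have r: "l' / z' \<le> (p' / zl') / (e' / zl')" .
  have "enn2real (l / z) = l' / z'" unfolding l z using l(2) ps by (simp add: divide_ennreal)
  moreover have "enn2real (p / zl) = p' / zl'" unfolding p zl using p(2) ps by (simp add: divide_ennreal)
  moreover have "enn2real (e / zl) = e' / zl'" unfolding e zl using e(2) ps by (simp add: divide_ennreal)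
  ultimately show ?thesis using r by simp
qed

lemma arith_upper:
  fixes u z p e zl :: ennreal
  assumes fin: "u < \<infinity>" "z < \<infinity>" "p < \<infinity>" "e < \<infinity>" "zl < \<infinity>"
    and pos: "z > 0" "e > 0" "zl > 0" and ineq: "p * z \<le> u * e"
  shows "enn2real (p / zl) / enn2real (e / zl) \<le> enn2real (u / z)"
proof -
  obtain u' where u: "u = ennreal u'" "0 \<le> u'" using fin(1) by (rule ennreal_obtain)
  obtain z' where z: "z = ennreal z'" "0 \<le> z'" using fin(2) by (rule ennreal_obtain)
  obtain p' where p: "p = ennreal p'" "0 \<le> p'" using fin(3) by (rule ennreal_obtain)
  obtain e' where e: "e = ennreal e'" "0 \<le> e'" using fin(4) by (rule ennreal_obtain)
  obtain zl' where zl: "zl = ennreal zl'" "0 \<le> zl'" using fin(5) by (rule ennreal_obtain)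
  have ps: "z' > 0" "e' > 0" "zl' > 0" using pos unfolding z e zl by auto
  have "ennreal (p' * z') \<le> ennreal (u' * e')" using ineq unfolding u z p e by (simp add: ennreal_mult[symmetric] u(2) z(2) p(2) e(2))
  then have le: "p' * z' \<le> u' * e'" using u(2) e(2) by (simp add: ennreal_le_iff)
  have "(p' / zl') / (e' / zl') = p' / e'" using ps by simp
  also have "p' / e' \<le> u' / z'" by (rule real_frac_le[OF ps(2,1) le])
  finally have r: "(p' / zl') / (e' / zl') \<le> u' / z'" .
  have "enn2real (u / z) = u' / z'" unfolding u z using u(2) ps by (simp add: divide_ennreal)
  moreover have "enn2real (p / zl) = p' / zl'" unfolding p zl using p(2) ps by (simp add: divide_ennreal)
  moreover have "enn2real (e / zl) = e' / zl'" unfolding e zl using e(2) ps by (simp add: divide_ennreal)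
  ultimately show ?thesis using r by simp
qed

lemma box_pos:
  fixes L A :: "'i set"
  assumes fin: "finite L" and AL: "A \<subseteq> L" and a: "a > 0"
    and fm: "f \<in> borel_measurable (PiM L (\<lambda>_. lborel :: real measure))" and fp: "\<And>x. f x > 0"
  shows "(\<integral>\<^sup>+x. f x * (\<Prod>j\<in>A. indicator {-a..a} (x j)) \<partial>PiM L (\<lambda>_. lborel :: real measure)) > 0"
proof -
  interpret product_sigma_finite "\<lambda>_::'i. lborel :: real measure" by standard
  let ?M = "PiM L (\<lambda>_. lborel :: real measure)"
  define B where "B = PiE L (\<lambda>j. if j \<in> A then {-a..a} else (UNIV :: real set))"
  have Bs: "B \<in> sets ?M" unfolding B_def by (rule sets_PiM_I_finite[OF fin]) auto
  have finA: "finite A" using fin AL finite_subset by blast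
  have "emeasure ?M B = (\<Prod>j\<in>L. emeasure lborel (if j \<in> A then {-a..a} else (UNIV :: real set)))"
    unfolding B_def by (rule emeasure_PiM[OF fin]) auto
  also have "\<dots> \<noteq> 0" using fin a by (auto simp: ennreal_prod_eq_0 split: if_splits)
  finally have Bpos: "emeasure ?M B \<noteq> 0" .
  have eq: "(\<Prod>j\<in>A. indicator {-a..a} (x j) :: ennreal) = indicator B x" if "x \<in> space ?M" for x
  proof -
    have "x \<in> B \<longleftrightarrow> (\<forall>j\<in>A. x j \<in> {-a..a})" using that AL unfolding B_def by (auto simp: space_PiM PiE_iff)
    then show ?thesis using finA by (simp add: prod_ind[OF finA] indicator_def)
  qed
  have im: "(\<lambda>x. f x * (\<Prod>j\<in>A. indicator {-a..a} (x j) :: ennreal)) \<in> borel_measurable ?M"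
  proof -
    have "indicator {-a..a} \<in> borel_measurable (lborel :: real measure)"
      by (rule borel_measurable_indicator) simp
    then have "(\<lambda>x. \<Prod>j\<in>A. indicator {-a..a} (x j) :: ennreal) \<in> borel_measurable ?M"
      by (intro prod_meas[OF AL])
    then show ?thesis by (rule borel_measurable_times_ennreal[OF fm])
  qed
  have nb: "x \<notin> B" if "x \<in> space ?M" "f x * (\<Prod>j\<in>A. indicator {-a..a} (x j)) = 0" for x
  proof
    assume "x \<in> B"
    then have "(\<Prod>j\<in>A. indicator {-a..a} (x j) :: ennreal) = 1" using eq[OF that(1)] by simp
    then show False using that(2) fp[of x] by simp
  qed
  show ?thesis
  proof (rule ccontr)
    assume "\<not> ?thesis"
    then have "(\<integral>\<^sup>+x. f x * (\<Prod>j\<in>A. indicator {-a..a} (x j)) \<partial>?M) = 0" by (simp add: zero_less_iff_neq_zero)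
    then have "AE x in ?M. f x * (\<Prod>j\<in>A. indicator {-a..a} (x j)) = 0" using nn_integral_0_iff_AE[OF im] by simp
    moreover have "AE x in ?M. x \<in> space ?M" by (rule AE_space)
    ultimately have "AE x in ?M. x \<notin> B" by eventually_elim (use nb in blast)
    moreover have "{x \<in> space ?M. \<not> x \<notin> B} = B" using sets.sets_into_space[OF Bs] by auto
    ultimately have "emeasure ?M B = 0"
      using AE_iff_measurable[OF Bs, of "\<lambda>x. x \<notin> B"] by simp
    then show False using Bpos by simp
  qed
qed


lemma exp_ineq:
  assumes "q1 + q2 \<le> p1 + p2"
  shows "ennreal (exp (- p1)) * ennreal (exp (- p2)) \<le> ennreal (exp (- q1)) * ennreal (exp (- q2))"
proof -
  have "exp (- p1) * exp (- p2) \<le> exp (- q1) * exp (- q2)"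
    using assms by (simp add: exp_add[symmetric])
  then show ?thesis by (simp add: ennreal_mult[symmetric] ennreal_leI)
qed

lemma ennreal_4:
  fixes w1 w2 w3 w4 i1 i2 i3 i4 i5 i6 :: ennreal
  assumes "w1 * w2 \<le> w3 * w4" "i1 = 1" "i2 = 1" "i3 = 1" "i4 = 1" "i5 = 1" "i6 = 1"
  shows "w1 * i1 * i2 * (w2 * i3) \<le> w3 * i4 * i5 * (w4 * i6)"
  using assms by (simp add: ac_simps)

theorem lemma6p2:
  fixes r :: nat and \<Psi> :: "site \<Rightarrow> real \<Rightarrow> real"
    and a T :: real and \<Lambda> A :: "site set" and i :: site
  assumes "r \<ge> 1" and "admissible_potential r \<Psi>"
    and "a > 0" and "T > 0"
    and "finite \<Lambda>" and "A \<subseteq> \<Lambda>" and "i \<in> \<Lambda> - A"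
  shows "measure (gibbs r \<Psi> (\<Lambda> - A) 0) {h. h i > T + a}
           \<le> measure (gibbs r \<Psi> \<Lambda> 0) ({h. h i > T} \<inter> {h. \<forall>j\<in>A. \<bar>h j\<bar> \<le> a})
             / measure (gibbs r \<Psi> \<Lambda> 0) {h. \<forall>j\<in>A. \<bar>h j\<bar> \<le> a}
       \<and> measure (gibbs r \<Psi> \<Lambda> 0) ({h. h i > T} \<inter> {h. \<forall>j\<in>A. \<bar>h j\<bar> \<le> a})
             / measure (gibbs r \<Psi> \<Lambda> 0) {h. \<forall>j\<in>A. \<bar>h j\<bar> \<le> a}
           \<le> measure (gibbs r \<Psi> (\<Lambda> - A) 0) {h. h i > T - a}"
proof -
  note adm = assms(2)
  have a: "a > 0" by (rule assms(3))
  have finL: "finite \<Lambda>" by (rule assms(5))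
  have AL: "A \<subseteq> \<Lambda>" by (rule assms(6))
  have iL: "i \<in> \<Lambda>" "i \<notin> A" using assms(7) by auto
  define S where "S = \<Lambda> - A"
  have finS: "finite S" unfolding S_def using finL by simp
  have finA: "finite A" using finL AL finite_subset by blast
  have SA: "S \<inter> A = {}" and LSA: "\<Lambda> = S \<union> A" and SL: "S \<subseteq> \<Lambda>" and iS: "i \<in> S"
    using AL iL unfolding S_def by auto
  define wL where "wL x = ennreal (exp (- HP \<Psi> (pairs r \<Lambda>) (ext_bc 0 \<Lambda> x)))" for x
  define wS where "wS b x = ennreal (exp (- HP \<Psi> (pairs r S) (ext_bc b S x)))" for b x
  define iP where "iP t x = (\<Prod>j\<in>{i}. indicator {t<..} (x j) :: ennreal)" for t and x :: config
  define iE where "iE x = (\<Prod>j\<in>A. indicator {-a..a} (x j) :: ennreal)" for x :: config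
  define bx where "bx c x = (\<Prod>j\<in>A. indicator {c..c+1} (x j) :: ennreal)" for c and x :: config
  have iP_eq: "iP t x = (if t < x i then 1 else 0)" for t x unfolding iP_def by (simp add: indicator_def)
  have iE_eq: "iE x = (if \<forall>j\<in>A. x j \<in> {-a..a} then 1 else 0)" for x unfolding iE_def by (rule prod_ind[OF finA])
  have bx_eq: "bx c x = (if \<forall>j\<in>A. x j \<in> {c..c+1} then 1 else 0)" for c x unfolding bx_def by (rule prod_ind[OF finA])

  have m_wL: "wL \<in> borel_measurable (PiM \<Lambda> (\<lambda>_. lborel))" unfolding wL_def[abs_def] by (rule w_meas[OF adm order_refl])
  have m_wS: "wS b \<in> borel_measurable (PiM \<Lambda> (\<lambda>_. lborel))" for b unfolding wS_def[abs_def] by (rule w_meas[OF adm SL])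
  have m_wS': "wS b \<in> borel_measurable (PiM S (\<lambda>_. lborel))" for b unfolding wS_def[abs_def] by (rule w_meas[OF adm order_refl])
  have m_iP: "iP t \<in> borel_measurable (PiM \<Lambda> (\<lambda>_. lborel))" for t unfolding iP_def[abs_def]
    by (rule prod_meas) (use iL in auto)
  have m_iP': "iP t \<in> borel_measurable (PiM S (\<lambda>_. lborel))" for t unfolding iP_def[abs_def]
    by (rule prod_meas) (use iS in auto)
  have m_iE: "iE \<in> borel_measurable (PiM \<Lambda> (\<lambda>_. lborel))" unfolding iE_def[abs_def]
    by (rule prod_meas[OF AL]) simp
  have m_bx: "bx c \<in> borel_measurable (PiM \<Lambda> (\<lambda>_. lborel))" for c unfolding bx_def[abs_def]
    by (rule prod_meas[OF AL]) simp
  have m_bx': "bx c \<in> borel_measurable (PiM A (\<lambda>_. lborel))" for c unfolding bx_def[abs_def]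
    by (rule prod_meas) simp_all
  note meas = m_wL m_wS m_wS' m_iP m_iP' m_iE m_bx m_bx'

  define ZL where "ZL = (\<integral>\<^sup>+x. wL x \<partial>PiM \<Lambda> (\<lambda>_. lborel))"
  define ZS where "ZS = (\<integral>\<^sup>+x. wS 0 x \<partial>PiM S (\<lambda>_. lborel))"
  have ZL_def': "part_fun r \<Psi> \<Lambda> 0 = ZL" unfolding ZL_def part_fun_def wL_def ham_HP ..
  have ZS_def': "part_fun r \<Psi> S 0 = ZS" unfolding ZS_def part_fun_def wS_def ham_HP ..
  have ZL_fin: "ZL < \<infinity>" unfolding ZL_def wL_def by (rule Z_finite[OF adm finL])
  have ZS_fin: "ZS < \<infinity>" unfolding ZS_def wS_def by (rule Z_finite[OF adm finS])
  have ZL_pos: "ZL > 0" unfolding ZL_def by (rule int_pos[OF m_wL _ space_pos[OF finL]]) (simp add: wL_def)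
  have ZS_pos: "ZS > 0" unfolding ZS_def by (rule int_pos[OF m_wS' _ space_pos[OF finS]]) (simp add: wS_def)

  define WPE where "WPE = (\<integral>\<^sup>+x. wL x * (iP T x * iE x) \<partial>PiM \<Lambda> (\<lambda>_. lborel))"
  define WE where "WE = (\<integral>\<^sup>+x. wL x * iE x \<partial>PiM \<Lambda> (\<lambda>_. lborel))"
  define WS where "WS t = (\<integral>\<^sup>+x. wS 0 x * iP t x \<partial>PiM S (\<lambda>_. lborel))" for t

  have WPE_le: "WPE \<le> ZL" unfolding WPE_def ZL_def
    by (intro nn_integral_mono) (auto simp: iP_eq iE_eq)
  have WE_le: "WE \<le> ZL" unfolding WE_def ZL_def
    by (intro nn_integral_mono) (auto simp: iE_eq)
  have WS_le: "WS t \<le> ZS" for t unfolding WS_def ZS_def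
    by (intro nn_integral_mono) (auto simp: iP_eq)
  have WE_pos: "WE > 0" unfolding WE_def iE_def
    by (rule box_pos[OF finL AL a m_wL]) (simp add: wL_def)
  have WPE_fin: "WPE < \<infinity>" and WE_fin: "WE < \<infinity>" and WS_fin: "WS t < \<infinity>" for t
    using WPE_le WE_le WS_le ZL_fin ZS_fin by (auto intro: le_less_trans)

  have extA: "(\<forall>j\<in>A. \<bar>ext_bc 0 \<Lambda> x j\<bar> \<le> a) = (\<forall>j\<in>A. x j \<in> {-a..a})" for x
  proof (rule ball_cong[OF refl])
    fix j assume "j \<in> A"
    then have "ext_bc 0 \<Lambda> x j = x j" using AL unfolding ext_bc_def by auto
    then show "(\<bar>ext_bc 0 \<Lambda> x j\<bar> \<le> a) = (x j \<in> {-a..a})" by (simp add: abs_le_iff) linarith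
  qed
  have extI: "ext_bc 0 \<Lambda> x i = x i" for x using iL unfolding ext_bc_def by simp
  have extI': "ext_bc 0 S x i = x i" for x using iS unfolding ext_bc_def by simp
  have U3: "{h. t < h i} \<in> sets (PiM UNIV (\<lambda>_. borel :: real measure))" for t
  proof -
    have "{h. t < h i} = (\<lambda>h. h i) -` {t<..} \<inter> space (PiM UNIV (\<lambda>_. borel :: real measure))"
      by (auto simp: space_PiM)
    also have "\<dots> \<in> sets (PiM UNIV (\<lambda>_. borel :: real measure))"
      by (rule measurable_sets[OF measurable_component_singleton]) auto
    finally show ?thesis .
  qed
  have U2: "{h. \<forall>j\<in>A. \<bar>h j\<bar> \<le> a} \<in> sets (PiM UNIV (\<lambda>_. borel :: real measure))"
  proof -
    have "Measurable.pred (PiM UNIV (\<lambda>_. borel :: real measure)) (\<lambda>h. \<forall>j\<in>A. \<bar>h j\<bar> \<le> a)"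
      using finA by measurable
    then show ?thesis by (simp add: pred_def space_PiM)
  qed
  have U1: "{h. T < h i} \<inter> {h. \<forall>j\<in>A. \<bar>h j\<bar> \<le> a} \<in> sets (PiM UNIV (\<lambda>_. borel :: real measure))"
    using U2 U3 by blast

  have g1: "measure (gibbs r \<Psi> \<Lambda> 0) ({h. T < h i} \<inter> {h. \<forall>j\<in>A. \<bar>h j\<bar> \<le> a}) = enn2real (WPE / ZL)"
  proof -
    have "emeasure (gibbs r \<Psi> \<Lambda> 0) ({h. T < h i} \<inter> {h. \<forall>j\<in>A. \<bar>h j\<bar> \<le> a}) = WPE / ZL"
      unfolding gibbs_emeasure[OF adm finL U1] ZL_def' WPE_def
    proof (intro arg_cong2[where f="(/)"] refl nn_integral_cong)
      fix x
      have "indicator ({h. T < h i} \<inter> {h. \<forall>j\<in>A. \<bar>h j\<bar> \<le> a}) (ext_bc 0 \<Lambda> x) = (iP T x * iE x :: ennreal)"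
        unfolding iP_eq iE_eq indicator_def using extA[of x] extI[of x] by simp
      then show "ennreal (exp (- HP \<Psi> (pairs r \<Lambda>) (ext_bc 0 \<Lambda> x))) * indicator ({h. T < h i} \<inter> {h. \<forall>j\<in>A. \<bar>h j\<bar> \<le> a}) (ext_bc 0 \<Lambda> x)
          = wL x * (iP T x * iE x)" unfolding wL_def by simp
    qed
    then show ?thesis unfolding measure_def by simp
  qed
  have g2: "measure (gibbs r \<Psi> \<Lambda> 0) {h. \<forall>j\<in>A. \<bar>h j\<bar> \<le> a} = enn2real (WE / ZL)"
  proof -
    have "emeasure (gibbs r \<Psi> \<Lambda> 0) {h. \<forall>j\<in>A. \<bar>h j\<bar> \<le> a} = WE / ZL"
      unfolding gibbs_emeasure[OF adm finL U2] ZL_def' WE_def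
    proof (intro arg_cong2[where f="(/)"] refl nn_integral_cong)
      fix x
      have "indicator {h. \<forall>j\<in>A. \<bar>h j\<bar> \<le> a} (ext_bc 0 \<Lambda> x) = (iE x :: ennreal)"
        unfolding iE_eq indicator_def using extA[of x] by simp
      then show "ennreal (exp (- HP \<Psi> (pairs r \<Lambda>) (ext_bc 0 \<Lambda> x))) * indicator {h. \<forall>j\<in>A. \<bar>h j\<bar> \<le> a} (ext_bc 0 \<Lambda> x)
          = wL x * iE x" unfolding wL_def by simp
    qed
    then show ?thesis unfolding measure_def by simp
  qed
  have g3: "measure (gibbs r \<Psi> S 0) {h. t < h i} = enn2real (WS t / ZS)" for t
  proof -
    have "emeasure (gibbs r \<Psi> S 0) {h. t < h i} = WS t / ZS"
      unfolding gibbs_emeasure[OF adm finS U3] ZS_def' WS_def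
    proof (intro arg_cong2[where f="(/)"] refl nn_integral_cong)
      fix x
      have "indicator {h. t < h i} (ext_bc 0 S x) = (iP t x :: ennreal)"
        unfolding iP_eq indicator_def using extI'[of x] by simp
      then show "ennreal (exp (- HP \<Psi> (pairs r S) (ext_bc 0 S x))) * indicator {h. t < h i} (ext_bc 0 S x)
          = wS 0 x * iP t x" unfolding wS_def by simp
    qed
    then show ?thesis unfolding measure_def by simp
  qed

  have AD1: "(\<integral>\<^sup>+x. wS (-a) x * iP T x * bx (-a-1) x \<partial>PiM \<Lambda> (\<lambda>_. lborel)) * (\<integral>\<^sup>+x. wL x * iE x \<partial>PiM \<Lambda> (\<lambda>_. lborel))
     \<le> (\<integral>\<^sup>+x. wL x * iE x * iP T x \<partial>PiM \<Lambda> (\<lambda>_. lborel)) * (\<integral>\<^sup>+x. wS (-a) x * bx (-a-1) x \<partial>PiM \<Lambda> (\<lambda>_. lborel))"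
  proof (rule ad_nd[OF finL])
    show "(\<lambda>x. wS (-a) x * iP T x * bx (-a-1) x) \<in> borel_measurable (PiM \<Lambda> (\<lambda>_. lborel))"
      by (intro borel_measurable_times_ennreal m_wS m_iP m_bx)
    show "(\<lambda>x. wL x * iE x) \<in> borel_measurable (PiM \<Lambda> (\<lambda>_. lborel))"
      by (intro borel_measurable_times_ennreal m_wL m_iE)
    show "(\<lambda>x. wL x * iE x * iP T x) \<in> borel_measurable (PiM \<Lambda> (\<lambda>_. lborel))"
      by (intro borel_measurable_times_ennreal m_wL m_iE m_iP)
    show "(\<lambda>x. wS (-a) x * bx (-a-1) x) \<in> borel_measurable (PiM \<Lambda> (\<lambda>_. lborel))"
      by (intro borel_measurable_times_ennreal m_wS m_bx)
    fix x y :: config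
    show "wS (-a) x * iP T x * bx (-a-1) x * (wL y * iE y)
        \<le> wL (sup x y) * iE (sup x y) * iP T (sup x y) * (wS (-a) (inf x y) * bx (-a-1) (inf x y))"
    proof (cases "T < x i \<and> (\<forall>j\<in>A. x j \<in> {-a-1..-a-1+1}) \<and> (\<forall>j\<in>A. y j \<in> {-a..a})")
      case True
      then have xT: "T < x i" and xA: "\<forall>j\<in>A. x j \<le> -a" "\<forall>j\<in>A. x j \<in> {-a-1..-a-1+1}"
        and yA: "\<forall>j\<in>A. -a \<le> y j" "\<forall>j\<in>A. y j \<in> {-a..a}" by auto
      have supA: "\<forall>j\<in>A. sup x y j \<in> {-a..a}"
      proof
        fix j assume "j \<in> A"
        then have "x j \<le> -a" "-a \<le> y j" "y j \<le> a" using xA yA by auto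
        then show "sup x y j \<in> {-a..a}" by (simp add: sup_max max_def)
      qed
      have infA: "\<forall>j\<in>A. inf x y j \<in> {-a-1..-a-1+1}"
      proof
        fix j assume "j \<in> A"
        then have "x j \<le> -a" "-a - 1 \<le> x j" "-a \<le> y j" using xA yA by auto
        then show "inf x y j \<in> {-a-1..-a-1+1}" by (simp add: inf_min min_def)
      qed
      have supT: "T < sup x y i" using xT by (simp add: sup_max)
      have core: "HP \<Psi> (pairs r \<Lambda>) (ext_bc 0 \<Lambda> (sup x y)) + HP \<Psi> (pairs r S) (ext_bc (-a) S (inf x y))
           \<le> HP \<Psi> (pairs r S) (ext_bc (-a) S x) + HP \<Psi> (pairs r \<Lambda>) (ext_bc 0 \<Lambda> y)"
        by (rule core_lower[OF adm finL AL S_def a xA(1) yA(1)])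
      have w: "wS (-a) x * wL y \<le> wL (sup x y) * wS (-a) (inf x y)"
        unfolding wS_def wL_def by (rule exp_ineq) (use core in linarith)
      show ?thesis
        by (rule ennreal_4[OF w]) (use xT xA(2) yA(2) supA infA supT in \<open>simp_all add: iP_eq iE_eq bx_eq\<close>)
    next
      case False
      then have "iP T x * bx (-a-1) x * iE y = 0" by (auto simp: iP_eq bx_eq iE_eq)
      then have z: "wS (-a) x * iP T x * bx (-a-1) x * (wL y * iE y) = 0"
        by (metis (no_types, lifting) mult.assoc mult.left_commute mult_zero_left mult_zero_right)
      show ?thesis unfolding z by (rule zero_le)
    qed
  qed

  have AD2: "(\<integral>\<^sup>+x. wL x * iE x * iP T x \<partial>PiM \<Lambda> (\<lambda>_. lborel)) * (\<integral>\<^sup>+x. wS a x * bx a x \<partial>PiM \<Lambda> (\<lambda>_. lborel))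
     \<le> (\<integral>\<^sup>+x. wS a x * iP T x * bx a x \<partial>PiM \<Lambda> (\<lambda>_. lborel)) * (\<integral>\<^sup>+x. wL x * iE x \<partial>PiM \<Lambda> (\<lambda>_. lborel))"
  proof (rule ad_nd[OF finL])
    show "(\<lambda>x. wL x * iE x * iP T x) \<in> borel_measurable (PiM \<Lambda> (\<lambda>_. lborel))"
      by (intro borel_measurable_times_ennreal m_wL m_iE m_iP)
    show "(\<lambda>x. wS a x * bx a x) \<in> borel_measurable (PiM \<Lambda> (\<lambda>_. lborel))"
      by (intro borel_measurable_times_ennreal m_wS m_bx)
    show "(\<lambda>x. wS a x * iP T x * bx a x) \<in> borel_measurable (PiM \<Lambda> (\<lambda>_. lborel))"
      by (intro borel_measurable_times_ennreal m_wS m_iP m_bx)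
    show "(\<lambda>x. wL x * iE x) \<in> borel_measurable (PiM \<Lambda> (\<lambda>_. lborel))"
      by (intro borel_measurable_times_ennreal m_wL m_iE)
    fix x y :: config
    show "wL x * iE x * iP T x * (wS a y * bx a y)
        \<le> wS a (sup x y) * iP T (sup x y) * bx a (sup x y) * (wL (inf x y) * iE (inf x y))"
    proof (cases "T < x i \<and> (\<forall>j\<in>A. x j \<in> {-a..a}) \<and> (\<forall>j\<in>A. y j \<in> {a..a+1})")
      case True
      then have xT: "T < x i" and xA: "\<forall>j\<in>A. x j \<le> a" "\<forall>j\<in>A. x j \<in> {-a..a}"
        and yA: "\<forall>j\<in>A. a \<le> y j" "\<forall>j\<in>A. y j \<in> {a..a+1}" by auto
      have supA: "\<forall>j\<in>A. sup x y j \<in> {a..a+1}"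
      proof
        fix j assume "j \<in> A"
        then have "x j \<le> a" "a \<le> y j" "y j \<le> a + 1" using xA yA by auto
        then show "sup x y j \<in> {a..a+1}" by (simp add: sup_max max_def)
      qed
      have infA: "\<forall>j\<in>A. inf x y j \<in> {-a..a}"
      proof
        fix j assume "j \<in> A"
        then have "x j \<le> a" "-a \<le> x j" "a \<le> y j" using xA yA by auto
        then show "inf x y j \<in> {-a..a}" by (simp add: inf_min min_def)
      qed
      have supT: "T < sup x y i" using xT by (simp add: sup_max)
      have core: "HP \<Psi> (pairs r S) (ext_bc a S (sup x y)) + HP \<Psi> (pairs r \<Lambda>) (ext_bc 0 \<Lambda> (inf x y))
           \<le> HP \<Psi> (pairs r \<Lambda>) (ext_bc 0 \<Lambda> x) + HP \<Psi> (pairs r S) (ext_bc a S y)"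
        by (rule core_upper[OF adm finL AL S_def a xA(1) yA(1)])
      have w: "wL x * wS a y \<le> wS a (sup x y) * wL (inf x y)"
        unfolding wS_def wL_def by (rule exp_ineq) (use core in linarith)
      show ?thesis
        by (rule ennreal_4[OF w]) (use xT xA(2) yA(2) supA infA supT in \<open>simp_all add: iP_eq iE_eq bx_eq\<close>)
    next
      case False
      then have "iE x * iP T x * bx a y = 0" by (auto simp: iP_eq bx_eq iE_eq)
      then have z: "wL x * iE x * iP T x * (wS a y * bx a y) = 0"
        by (metis (no_types, lifting) mult.assoc mult.left_commute mult_zero_left mult_zero_right)
      show ?thesis unfolding z by (rule zero_le)
    qed
  qed

  have FI: "(\<integral>\<^sup>+x. F (restrict x S) * G (restrict x A) \<partial>PiM \<Lambda> (\<lambda>_. lborel))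
       = (\<integral>\<^sup>+x. F x \<partial>PiM S (\<lambda>_. lborel)) * (\<integral>\<^sup>+x. G x \<partial>PiM A (\<lambda>_. lborel :: real measure))"
    if "F \<in> borel_measurable (PiM S (\<lambda>_. lborel))" "G \<in> borel_measurable (PiM A (\<lambda>_. lborel))" for F G
    using fact_int[OF finS finA SA that] unfolding LSA[symmetric] .
  have R1: "wS b (restrict x S) = wS b x" for b x
  proof -
    have "ext_bc b S (restrict x S) = ext_bc b S x" by (auto simp: ext_bc_def fun_eq_iff)
    then show ?thesis unfolding wS_def by simp
  qed
  have R2: "iP t (restrict x S) = iP t x" for t x using iS by (simp add: iP_eq)
  have R3: "bx c (restrict x A) = bx c x" for c x unfolding bx_def by (rule prod.cong) auto
  have box1: "(\<integral>\<^sup>+x. bx c x \<partial>PiM A (\<lambda>_. lborel :: real measure)) = 1" for c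
    unfolding bx_def by (rule box_int[OF finA])
  have J1: "(\<integral>\<^sup>+x. wS b x * iP t x * bx c x \<partial>PiM \<Lambda> (\<lambda>_. lborel)) = (\<integral>\<^sup>+x. wS b x * iP t x \<partial>PiM S (\<lambda>_. lborel))" for b t c
  proof -
    have "(\<integral>\<^sup>+x. wS b x * iP t x * bx c x \<partial>PiM \<Lambda> (\<lambda>_. lborel))
        = (\<integral>\<^sup>+x. (\<lambda>y. wS b y * iP t y) (restrict x S) * bx c (restrict x A) \<partial>PiM \<Lambda> (\<lambda>_. lborel))"
      by (simp add: R1 R2 R3)
    also have "\<dots> = (\<integral>\<^sup>+x. wS b x * iP t x \<partial>PiM S (\<lambda>_. lborel)) * (\<integral>\<^sup>+x. bx c x \<partial>PiM A (\<lambda>_. lborel :: real measure))"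
      by (rule FI) (intro borel_measurable_times_ennreal m_wS' m_iP', rule m_bx')
    finally show ?thesis using box1 by simp
  qed
  have J2: "(\<integral>\<^sup>+x. wS b x * bx c x \<partial>PiM \<Lambda> (\<lambda>_. lborel)) = (\<integral>\<^sup>+x. wS b x \<partial>PiM S (\<lambda>_. lborel))" for b c
  proof -
    have "(\<integral>\<^sup>+x. wS b x * bx c x \<partial>PiM \<Lambda> (\<lambda>_. lborel))
        = (\<integral>\<^sup>+x. wS b (restrict x S) * bx c (restrict x A) \<partial>PiM \<Lambda> (\<lambda>_. lborel))"
      by (simp add: R1 R3)
    also have "\<dots> = (\<integral>\<^sup>+x. wS b x \<partial>PiM S (\<lambda>_. lborel)) * (\<integral>\<^sup>+x. bx c x \<partial>PiM A (\<lambda>_. lborel :: real measure))"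
      by (rule FI[OF m_wS' m_bx'])
    finally show ?thesis using box1 by simp
  qed
  have J3: "(\<integral>\<^sup>+x. wS b x * iP t x \<partial>PiM S (\<lambda>_. lborel)) = WS (t - b)" for b t
    unfolding wS_def iP_eq WS_def by (rule shift_S[OF adm finS iS])
  have J4: "(\<integral>\<^sup>+x. wS b x \<partial>PiM S (\<lambda>_. lborel)) = ZS" for b
    unfolding wS_def ZS_def by (rule shift_S0[OF adm finS])
  have J5: "(\<integral>\<^sup>+x. wL x * iE x * iP T x \<partial>PiM \<Lambda> (\<lambda>_. lborel)) = WPE"
    unfolding WPE_def by (simp add: ac_simps)

  have low: "WS (T + a) * WE \<le> WPE * ZS"
    using AD1 unfolding J1 J2 J3 J4 J5 WE_def[symmetric] by simp
  have up: "WPE * ZS \<le> WS (T - a) * WE"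
    using AD2 unfolding J1 J2 J3 J4 J5 WE_def[symmetric] by simp

  have L: "enn2real (WS (T + a) / ZS) \<le> enn2real (WPE / ZL) / enn2real (WE / ZL)"
    by (rule arith_lower[OF WS_fin ZS_fin WPE_fin WE_fin ZL_fin ZS_pos WE_pos ZL_pos low])
  have U: "enn2real (WPE / ZL) / enn2real (WE / ZL) \<le> enn2real (WS (T - a) / ZS)"
    by (rule arith_upper[OF WS_fin ZS_fin WPE_fin WE_fin ZL_fin ZS_pos WE_pos ZL_pos up])
  show ?thesis
    unfolding S_def[symmetric] g1 g2 g3 using L U by simp
qed


end
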